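(* Let $u:\mathbb{R}^2\to\mathbb{R}^2$ be a continuous divergence-free vector field such that $|u|\neq0$ on a domain $\mathcal{D}\subset\mathbb{R}^2$. Then for any $a\in\mathcal D$, the solution $X(a,t)$ of $\frac{d}{dt}X(a,t)=u(X(a,t))$, $X(a,0)=a$, is unique (forward and backward in time) as long as it stays in $\mathcal{D}$. *)

theory Defs
  imports "HOL-Analysis.Analysis"
begin

definition grad2 :: "(real^2 \<Rightarrow> real) \<Rightarrow> real^2 \<Rightarrow> real^2" where
  "grad2 f x = (\<chi> i. frechet_derivative f (at x) (axis i 1))"

fun Ck2 :: "nat \<Rightarrow> (real^2 \<Rightarrow> real) \<Rightarrow> bool" where
  "Ck2 0 f = continuous_on UNIV f"
| "Ck2 (Suc k) f = (continuous_on UNIV f \<and> (\<forall>x. f differentiable (at x)) \<and>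
      (\<forall>i. Ck2 k (\<lambda>x. frechet_derivative f (at x) (axis i 1))))"

definition smooth2 :: "(real^2 \<Rightarrow> real) \<Rightarrow> bool" where
  "smooth2 f \<longleftrightarrow> (\<forall>k. Ck2 k f)"

definition test_fun2 :: "(real^2 \<Rightarrow> real) \<Rightarrow> bool" where
  "test_fun2 f \<longleftrightarrow> smooth2 f \<and> compact (closure {x. f x \<noteq> 0})"

definition weakly_div_free :: "(real^2 \<Rightarrow> real^2) \<Rightarrow> bool" where
  "weakly_div_free u \<longleftrightarrow>
     (\<forall>\<phi>. test_fun2 \<phi> \<longrightarrow> integral UNIV (\<lambda>x. u x \<bullet> grad2 \<phi> x) = 0)"

end

theory Submission
  imports Defs "HOL-Computational_Algebra.Polynomial"
begin

hide_const (open) Polynomial.content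

coinductive smooth1 :: "(real \<Rightarrow> real) \<Rightarrow> bool" where
  smooth1I: "(\<And>x. (f has_real_derivative f' x) (at x)) \<Longrightarrow> smooth1 f' \<Longrightarrow> smooth1 f"

definition hp :: "real poly \<Rightarrow> real \<Rightarrow> real" where
  "hp p x = (if x > 0 then poly p (1/x) * exp (-(1/x)) else 0)"

lemma poly_exp_lim: "((\<lambda>y. poly p y * exp (-y)) \<longlongrightarrow> (0::real)) at_top"
proof -
  have eq: "(\<lambda>y. poly p y * exp (-y)) = (\<lambda>y. \<Sum>i\<le>degree p. coeff p i * (y ^ i / exp y))"
    by (rule ext) (simp add: poly_altdef exp_minus sum_distrib_right divide_inverse mult.assoc)
  show ?thesis unfolding eq
    by (rule tendsto_null_sum) (metis (no_types) tendsto_mult_right_zero tendsto_power_div_exp_0 times_divide_eq_right)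
qed

lemma hp_deriv0: "(hp p has_real_derivative 0) (at 0)"
proof -
  have r: "((\<lambda>y. (hp p y - hp p 0) / (y - 0)) \<longlongrightarrow> 0) (at_right 0)"
  proof -
    have "((\<lambda>y. poly (pCons 0 p) y * exp (-y)) \<longlongrightarrow> (0::real)) at_top"
      by (rule poly_exp_lim)
    from filterlim_compose[OF this filterlim_inverse_at_top_right]
    have "((\<lambda>x. poly (pCons 0 p) (inverse x) * exp (-(inverse x))) \<longlongrightarrow> (0::real)) (at_right 0)"
      by simp
    then show ?thesis
      apply (rule Lim_transform_eventually)
      apply (simp add: eventually_at_right_less[THEN eventually_mono] )
      apply (rule eventually_mono[OF eventually_at_right_less])
      by (simp add: hp_def field_simps)
  qed
  have l: "((\<lambda>y. (hp p y - hp p 0) / (y - 0)) \<longlongrightarrow> 0) (at_left 0)"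
    apply (rule Lim_transform_eventually[where f="\<lambda>_. 0"])
     apply simp
    using eventually_at_left_real[of "-1" 0] by (rule eventually_mono) (auto simp add: hp_def)
  show ?thesis unfolding has_field_derivative_iff
    using l r by (rule filterlim_split_at)
qed

definition hpd :: "real poly \<Rightarrow> real poly" where
  "hpd p = [:0,0,1:] * (p - pderiv p)"

lemma hp_deriv: "(hp p has_real_derivative hp (hpd p) x) (at x)"
proof (cases "x = 0")
  case True then show ?thesis using hp_deriv0 by (simp add: hp_def)
next
  case False
  show ?thesis
  proof (cases "x > 0")
    case True
    have d: "((\<lambda>x. poly p (1/x) * exp (-(1/x))) has_real_derivative hp (hpd p) x) (at x)"
    proof -
      have "((\<lambda>x. poly p (1/x) * exp (-(1/x))) has_real_derivative
          (poly (pderiv p) (1/x) * (- 1 / x^2)) * exp (-(1/x)) + poly p (1/x) * (exp (-(1/x)) * (1/x^2))) (at x)"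
        using True
        by (auto intro!: derivative_eq_intros DERIV_chain2[OF poly_DERIV] simp: power2_eq_square field_simps)
      moreover have "(poly (pderiv p) (1/x) * (- 1 / x^2)) * exp (-(1/x)) + poly p (1/x) * (exp (-(1/x)) * (1/x^2))
            = hp (hpd p) x"
        using True by (simp add: hp_def hpd_def algebra_simps power2_eq_square)
      ultimately show ?thesis by simp
    qed
    show ?thesis
      by (rule has_field_derivative_transform_within_open[OF d, where S="{0<..}"])
        (use True in \<open>auto simp: hp_def\<close>)
  next
    case False
    with \<open>x \<noteq> 0\<close> have "x < 0" by simp
    have "((\<lambda>_. 0) has_real_derivative hp (hpd p) x) (at x)" using \<open>x < 0\<close> by (simp add: hp_def)
    then show ?thesis
      by (rule has_field_derivative_transform_within_open[where S="{..<0}"])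
        (use \<open>x < 0\<close> in \<open>auto simp: hp_def\<close>)
  qed
qed

lemma smooth1_hp: "smooth1 (hp p)"
proof -
  have "\<forall>f. (\<exists>p. f = hp p) \<longrightarrow> smooth1 f"
  proof (intro allI impI)
    fix f assume "\<exists>p. f = hp p"
    then show "smooth1 f"
    proof (coinduction arbitrary: f)
      case smooth1
      then obtain p where "f = hp p" by blast
      then show ?case using hp_deriv by blast
    qed
  qed
  then show ?thesis by blast
qed

definition dd :: "(real \<Rightarrow> real) \<Rightarrow> real \<Rightarrow> real" where
  "dd f = (SOME f'. (\<forall>x. (f has_real_derivative f' x) (at x)) \<and> smooth1 f')"

lemma smooth1_dd: assumes "smooth1 f"
  shows "\<And>x. (f has_real_derivative dd f x) (at x)" "smooth1 (dd f)"
proof -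
  from assms obtain f' where "\<And>x. (f has_real_derivative f' x) (at x)" "smooth1 f'"
    by (cases rule: smooth1.cases) auto
  then have "(\<forall>x. (f has_real_derivative dd f x) (at x)) \<and> smooth1 (dd f)"
    unfolding dd_def by (intro someI[where P="\<lambda>f'. (\<forall>x. (f has_real_derivative f' x) (at x)) \<and> smooth1 f'"]) auto
  then show "\<And>x. (f has_real_derivative dd f x) (at x)" "smooth1 (dd f)" by auto
qed

lemma smooth1_cont: "smooth1 f \<Longrightarrow> continuous_on S f"
  by (meson DERIV_continuous continuous_at_imp_continuous_on smooth1_dd(1))

lemma smooth1_isCont: "smooth1 f \<Longrightarrow> isCont f x"
  by (meson DERIV_continuous smooth1_dd(1))

lemma sumprod_deriv:
  assumes "\<forall>(a,b)\<in>set L. smooth1 a \<and> smooth1 b"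
  shows "((\<lambda>x. \<Sum>(a,b)\<leftarrow>L. a x * b x) has_real_derivative
          (\<Sum>(a,b)\<leftarrow>concat (map (\<lambda>(a,b). [(dd a, b), (a, dd b)]) L). a x * b x)) (at x)"
  using assms
proof (induction L)
  case Nil then show ?case by simp
next
  case (Cons ab L)
  obtain a b where ab: "ab = (a,b)" by fastforce
  have sa: "smooth1 a" "smooth1 b" using Cons.prems ab by auto
  have IH: "((\<lambda>x. \<Sum>(a,b)\<leftarrow>L. a x * b x) has_real_derivative
          (\<Sum>(a,b)\<leftarrow>concat (map (\<lambda>(a,b). [(dd a, b), (a, dd b)]) L). a x * b x)) (at x)"
    using Cons by auto
  have m: "((\<lambda>x. a x * b x) has_real_derivative dd a x * b x + a x * dd b x) (at x)"
    using DERIV_mult[OF smooth1_dd(1)[OF sa(1)] smooth1_dd(1)[OF sa(2)]] by (simp add: algebra_simps)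
  have "((\<lambda>x. a x * b x + (\<Sum>(a,b)\<leftarrow>L. a x * b x)) has_real_derivative
        (dd a x * b x + a x * dd b x) + (\<Sum>(a,b)\<leftarrow>concat (map (\<lambda>(a,b). [(dd a, b), (a, dd b)]) L). a x * b x)) (at x)"
    by (rule DERIV_add[OF m IH])
  then show ?case by (simp add: ab algebra_simps)
qed

lemma smooth1_sumprod:
  assumes "\<forall>(a,b)\<in>set L. smooth1 a \<and> smooth1 b"
  shows "smooth1 (\<lambda>x. \<Sum>(a,b)\<leftarrow>L. a x * b x)"
proof -
  have "\<forall>f. (\<exists>L. f = (\<lambda>x. \<Sum>(a,b)\<leftarrow>L. a x * b x) \<and> (\<forall>(a,b)\<in>set L. smooth1 a \<and> smooth1 b)) \<longrightarrow> smooth1 f"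
  proof (intro allI impI)
    fix f assume "\<exists>L. f = (\<lambda>x. \<Sum>(a,b)\<leftarrow>L. a x * b x) \<and> (\<forall>(a,b)\<in>set L. smooth1 a \<and> smooth1 b)"
    then show "smooth1 f"
    proof (coinduction arbitrary: f)
      case smooth1
      then obtain L where L: "f = (\<lambda>x. \<Sum>(a,b)\<leftarrow>L. a x * b x)" "\<forall>(a,b)\<in>set L. smooth1 a \<and> smooth1 b"
        by blast
      define L' where "L' = concat (map (\<lambda>(a,b). [(dd a, b), (a, dd b)]) L)"
      define F' where "F' = (\<lambda>x. \<Sum>(a,b)\<leftarrow>L'. a x * b x)"
      have "\<forall>(a,b)\<in>set L'. smooth1 a \<and> smooth1 b"
        using L(2) smooth1_dd(2) unfolding L'_def by auto
      then have e: "\<exists>L. F' = (\<lambda>x. \<Sum>(a,b)\<leftarrow>L. a x * b x) \<and> (\<forall>(a,b)\<in>set L. smooth1 a \<and> smooth1 b)"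
        unfolding F'_def by blast
      have d: "\<forall>x. (f has_real_derivative F' x) (at x)"
        using sumprod_deriv[OF L(2)] L(1) unfolding F'_def L'_def by blast
      show ?case
        apply (rule exI, rule exI, rule conjI, rule refl, rule conjI, rule d)
        apply (rule disjI1, rule exI[of _ F'], rule conjI[OF refl]) by (rule e)
    qed
  qed
  then show ?thesis using assms by blast
qed

lemma smooth1_const: "smooth1 (\<lambda>_. c)"
proof -
  have "\<forall>f. (\<exists>c. f = (\<lambda>_. c)) \<longrightarrow> smooth1 f"
  proof (intro allI impI)
    fix f assume "\<exists>c. f = (\<lambda>_::real. c::real)"
    then show "smooth1 f"
    proof (coinduction arbitrary: f)
      case smooth1
      then show ?case by (auto intro!: exI[of _ "\<lambda>_. 0"])
    qed
  qed
  then show ?thesis by blast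
qed

lemma smooth1_mult: "smooth1 f \<Longrightarrow> smooth1 g \<Longrightarrow> smooth1 (\<lambda>x. f x * g x)"
  using smooth1_sumprod[of "[(f,g)]"] by simp

lemma smooth1_add: "smooth1 f \<Longrightarrow> smooth1 g \<Longrightarrow> smooth1 (\<lambda>x. f x + g x)"
  using smooth1_sumprod[of "[(f,\<lambda>_. 1),(g,\<lambda>_. 1)]"] smooth1_const by simp

lemma smooth1_cmult: "smooth1 f \<Longrightarrow> smooth1 (\<lambda>x. c * f x)"
  using smooth1_mult[OF smooth1_const] by blast

lemma smooth1_diff: "smooth1 f \<Longrightarrow> smooth1 g \<Longrightarrow> smooth1 (\<lambda>x. f x - g x)"
  using smooth1_add[OF _ smooth1_cmult[of g "-1"]] by simp

lemma smooth1_affine0: "smooth1 f \<Longrightarrow> smooth1 (\<lambda>x. \<gamma> * f (\<alpha> * x + \<beta>))"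
proof -
  have "\<forall>g. (\<exists>f \<alpha> \<beta> \<gamma>. smooth1 f \<and> g = (\<lambda>x. \<gamma> * f (\<alpha> * x + \<beta>))) \<longrightarrow> smooth1 g"
  proof (intro allI impI)
    fix g assume "\<exists>f \<alpha> \<beta> \<gamma>. smooth1 f \<and> g = (\<lambda>x. \<gamma> * f (\<alpha> * x + \<beta>))"
    then show "smooth1 g"
    proof (coinduction arbitrary: g)
      case smooth1
      then obtain f \<alpha> \<beta> \<gamma> where f: "smooth1 f" "g = (\<lambda>x. \<gamma> * f (\<alpha> * x + \<beta>))" by blast
      define F' where "F' = (\<lambda>x. (\<gamma> * \<alpha>) * dd f (\<alpha> * x + \<beta>))"
      have d: "\<forall>x. (g has_real_derivative F' x) (at x)"
        unfolding f(2) F'_def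
        by (auto intro!: derivative_eq_intros DERIV_chain2[OF smooth1_dd(1)[OF f(1)]])
      have e: "\<exists>f \<alpha> \<beta> \<gamma>. smooth1 f \<and> F' = (\<lambda>x. \<gamma> * f (\<alpha> * x + \<beta>))"
        unfolding F'_def using smooth1_dd(2)[OF f(1)] by blast
      show ?case
        apply (rule exI, rule exI, rule conjI, rule refl, rule conjI, rule d)
        apply (rule disjI1, rule exI[of _ F'], rule conjI[OF refl]) by (rule e)
    qed
  qed
  then show "smooth1 f \<Longrightarrow> smooth1 (\<lambda>x. \<gamma> * f (\<alpha> * x + \<beta>))"
    by blast
qed

lemma smooth1_affine: "smooth1 f \<Longrightarrow> smooth1 (\<lambda>x. f (\<alpha> * x + \<beta>))"
  using smooth1_affine0[of f 1] by simp

definition rho :: "real \<Rightarrow> real" where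
  "rho x = hp 1 x * hp 1 (1 - x)"

lemma smooth1_rho: "smooth1 rho"
  unfolding rho_def
  using smooth1_mult[OF smooth1_hp smooth1_affine[OF smooth1_hp, where \<alpha>="-1" and \<beta>=1]] by simp

lemma rho_nonneg: "rho x \<ge> 0"
  by (simp add: rho_def hp_def)

lemma rho_zero: "x \<le> 0 \<or> x \<ge> 1 \<Longrightarrow> rho x = 0"
  by (auto simp: rho_def hp_def)

lemma rho_pos: "0 < x \<Longrightarrow> x < 1 \<Longrightarrow> rho x > 0"
  by (simp add: rho_def hp_def)


lemma mvt_deriv:
  fixes f :: "real \<Rightarrow> real"
  assumes "a < b" "\<And>x. (f has_real_derivative f' x) (at x)"
  shows "\<exists>z. a < z \<and> z < b \<and> f b - f a = (b - a) * f' z"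
proof -
  have c: "continuous_on {a..b} f"
    using assms(2) by (meson DERIV_continuous continuous_at_imp_continuous_on)
  obtain l z where "a < z" "z < b" "DERIV f z :> l" "f b - f a = (b - a) * l"
    using MVT[OF assms(1) c] assms(2) real_differentiable_def by blast
  moreover have "l = f' z" using DERIV_unique \<open>DERIV f z :> l\<close> assms(2) by blast
  ultimately show ?thesis by blast
qed

definition Gr :: "real \<Rightarrow> real" where
  "Gr x = integral {-1..x} rho"

lemma Gr_zero_neg: assumes "x < -1/2" shows "Gr x = 0"
proof (cases "x < -1")
  case True then show ?thesis by (simp add: Gr_def)
next
  case False
  have "integral {-1..x} rho = integral {-1..x} (\<lambda>_. 0)"
    by (rule integral_cong) (use assms in \<open>auto intro: rho_zero\<close>)
  then show ?thesis by (simp add: Gr_def)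
qed

lemma Gr_deriv: "(Gr has_real_derivative rho x) (at x)"
proof (cases "x > -1")
  case True
  have c: "continuous_on {-1..x+1} rho" using smooth1_cont[OF smooth1_rho] .
  have "(Gr has_real_derivative rho x) (at x within {-1..x+1})"
    unfolding Gr_def by (rule integral_has_real_derivative[OF c]) (use True in auto)
  then have "(Gr has_real_derivative rho x) (at x within {-1<..<x+1})"
    by (rule DERIV_subset) auto
  then show ?thesis using True
    by (subst (asm) at_within_open) auto
next
  case False
  have "((\<lambda>_. 0) has_real_derivative rho x) (at x)"
    using False rho_zero[of x] by simp
  then show ?thesis
    by (rule has_field_derivative_transform_within_open[where S="{..< -1/2}"])
      (use False Gr_zero_neg in auto)
qed

lemma smooth1_Gr: "smooth1 Gr"
  using smooth1I[OF Gr_deriv smooth1_rho] .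

lemma Gr_0: "Gr 0 = 0"
proof -
  obtain z where "-1 < z" "z < 0" "Gr 0 - Gr (-1) = (0 - -1) * rho z"
    using mvt_deriv[OF _ Gr_deriv, of "-1" 0] by auto
  then show ?thesis using Gr_zero_neg[of "-1"] rho_zero[of z] by simp
qed

lemma Gr_le0: "x \<le> 0 \<Longrightarrow> Gr x = 0"
proof (cases "x = 0")
  case False
  assume "x \<le> 0" then have "x < 0" using False by simp
  obtain z where "x < z" "z < 0" "Gr 0 - Gr x = (0 - x) * rho z"
    using mvt_deriv[OF _ Gr_deriv, of x 0] \<open>x < 0\<close> by auto
  then show ?thesis using Gr_0 rho_zero[of z] by simp
qed (simp add: Gr_0)

lemma Gr_1_pos: "Gr 1 > 0"
proof -
  obtain z where "0 < z" "z < 1" "Gr 1 - Gr 0 = (1 - 0) * rho z"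
    using mvt_deriv[OF _ Gr_deriv, of 0 1] by auto
  then show ?thesis using Gr_0 rho_pos[of z] by simp
qed

lemma Gr_ge1: "x \<ge> 1 \<Longrightarrow> Gr x = Gr 1"
proof (cases "x = 1")
  case False
  assume "x \<ge> 1" then have "1 < x" using False by simp
  obtain z where "1 < z" "z < x" "Gr x - Gr 1 = (x - 1) * rho z"
    using mvt_deriv[OF _ Gr_deriv, of 1 x] \<open>1 < x\<close> by auto
  then show ?thesis using rho_zero[of z] by simp
qed simp

lemma Gr_mono: "x \<le> y \<Longrightarrow> Gr x \<le> Gr y"
proof (cases "x = y")
  case False
  assume "x \<le> y" then have "x < y" using False by simp
  obtain z where "x < z" "z < y" "Gr y - Gr x = (y - x) * rho z"
    using mvt_deriv[OF _ Gr_deriv, of x y] \<open>x < y\<close> by auto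
  moreover have "0 \<le> (y - x) * rho z" using rho_nonneg[of z] \<open>x < y\<close> by simp
  ultimately show ?thesis by linarith
qed simp

definition St :: "real \<Rightarrow> real" where "St x = Gr x / Gr 1"
definition wt :: "real \<Rightarrow> real" where "wt x = rho x / Gr 1"

lemma St_deriv: "(St has_real_derivative wt x) (at x)"
  unfolding St_def wt_def using DERIV_cdivide[OF Gr_deriv, where c="Gr 1"] by simp

lemma smooth1_wt: "smooth1 wt"
  unfolding wt_def divide_inverse using smooth1_mult[OF smooth1_rho smooth1_const] .

lemma smooth1_St: "smooth1 St"
  using smooth1I[OF St_deriv smooth1_wt] .

lemma St_le0: "x \<le> 0 \<Longrightarrow> St x = 0" by (simp add: St_def Gr_le0)
lemma St_ge1: "x \<ge> 1 \<Longrightarrow> St x = 1" using Gr_1_pos Gr_ge1[of x] by (simp add: St_def)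
lemma St_mono: "x \<le> y \<Longrightarrow> St x \<le> St y" unfolding St_def by (rule divide_right_mono) (use Gr_1_pos Gr_mono in auto)
lemma St_nonneg: "St x \<ge> 0"
proof (cases "x \<le> 0")
  case True then show ?thesis by (simp add: St_le0)
next
  case False then show ?thesis using St_mono[of 0 x] St_le0[of 0] by linarith
qed
lemma St_le1: "St x \<le> 1"
proof (cases "x \<ge> 1")
  case True then show ?thesis by (simp add: St_ge1)
next
  case False then show ?thesis using St_mono[of x 1] St_ge1[of 1] by linarith
qed
lemma wt_nonneg: "wt x \<ge> 0" using Gr_1_pos rho_nonneg by (simp add: wt_def)
lemma wt_zero: "x \<le> 0 \<or> x \<ge> 1 \<Longrightarrow> wt x = 0" using rho_zero by (simp add: wt_def)


definition phi2 :: "(real \<Rightarrow> real) \<Rightarrow> (real \<Rightarrow> real) \<Rightarrow> real^2 \<Rightarrow> real" where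
  "phi2 F G z = F (z$1) * G (z$2)"

lemma phi2_has_derivative:
  assumes "smooth1 F" "smooth1 G"
  shows "(phi2 F G has_derivative (\<lambda>h. dd F (x$1) * G (x$2) * h$1 + F (x$1) * dd G (x$2) * h$2)) (at x)"
proof -
  have f: "((\<lambda>z. F (z$1)) has_derivative (\<lambda>h. dd F (x$1) * h$1)) (at x)"
    using has_derivative_compose[OF bounded_linear_imp_has_derivative[OF bounded_linear_vec_nth[where i="1::2"]]
        smooth1_dd(1)[OF assms(1), unfolded has_field_derivative_def]] by (simp add: mult.commute)
  have g: "((\<lambda>z. G (z$2)) has_derivative (\<lambda>h. dd G (x$2) * h$2)) (at x)"
    using has_derivative_compose[OF bounded_linear_imp_has_derivative[OF bounded_linear_vec_nth[where i="2::2"]]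
        smooth1_dd(1)[OF assms(2), unfolded has_field_derivative_def]] by (simp add: mult.commute)
  show ?thesis unfolding phi2_def
    using has_derivative_mult[OF f g] by (simp add: algebra_simps)
qed

lemma phi2_partial:
  assumes "smooth1 F" "smooth1 G"
  shows "frechet_derivative (phi2 F G) (at x) (axis 1 1) = phi2 (dd F) G x"
    "frechet_derivative (phi2 F G) (at x) (axis 2 1) = phi2 F (dd G) x"
  using frechet_derivative_at[OF phi2_has_derivative[OF assms, of x], symmetric]
  by (auto simp: phi2_def axis_def)

lemma phi2_Ck2: "smooth1 F \<Longrightarrow> smooth1 G \<Longrightarrow> Ck2 k (phi2 F G)"
proof (induction k arbitrary: F G)
  case 0
  have "isCont (phi2 F G) x" for x
    using phi2_has_derivative[OF 0, of x] by (rule has_derivative_continuous)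
  then show ?case by (simp add: continuous_at_imp_continuous_on)
next
  case (Suc k)
  have d: "\<And>x. phi2 F G differentiable (at x)"
    using phi2_has_derivative[OF Suc.prems] differentiable_def by blast
  have c: "continuous_on UNIV (phi2 F G)"
    using d by (simp add: continuous_at_imp_continuous_on differentiable_imp_continuous_within)
  have "Ck2 k (\<lambda>x. frechet_derivative (phi2 F G) (at x) (axis i 1))" for i :: 2
  proof -
    consider "i = 1" | "i = 2" using exhaust_2 by blast
    then show ?thesis
    proof cases
      case 1
      then show ?thesis using phi2_partial(1)[OF Suc.prems] Suc.IH[OF smooth1_dd(2)[OF Suc.prems(1)] Suc.prems(2)]
        by simp
    next
      case 2
      then show ?thesis using phi2_partial(2)[OF Suc.prems] Suc.IH[OF Suc.prems(1) smooth1_dd(2)[OF Suc.prems(2)]]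
        by simp
    qed
  qed
  then show ?case using c d by simp
qed

lemma phi2_test:
  assumes "smooth1 F" "smooth1 G" "\<And>x. x < a \<or> x > b \<Longrightarrow> F x = 0" "\<And>y. y < c \<or> y > d \<Longrightarrow> G y = 0"
  shows "test_fun2 (phi2 F G)"
proof -
  have "{z. phi2 F G z \<noteq> 0} \<subseteq> cbox (vector [a, c]) (vector [b, d])"
  proof
    fix z assume "z \<in> {z. phi2 F G z \<noteq> 0}"
    then have "F (z$1) \<noteq> 0" "G (z$2) \<noteq> 0" by (auto simp: phi2_def)
    then have "a \<le> z$1" "z$1 \<le> b" "c \<le> z$2" "z$2 \<le> d" using assms(3,4) by force+
    then show "z \<in> cbox (vector [a, c]) (vector [b, d])"
      by (simp add: mem_box_cart forall_2)
  qed
  then have "bounded {z. phi2 F G z \<noteq> 0}" using bounded_cbox bounded_subset by blast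
  then show ?thesis unfolding test_fun2_def smooth2_def using phi2_Ck2[OF assms(1,2)] by simp
qed

lemma grad2_phi2:
  assumes "smooth1 F" "smooth1 G"
  shows "grad2 (phi2 F G) z = vector [dd F (z$1) * G (z$2), F (z$1) * dd G (z$2)]"
  unfolding grad2_def using phi2_partial[OF assms]
  by (simp add: vec_eq_iff forall_2 phi2_def)

lemma weak_phi2:
  assumes "weakly_div_free u" "smooth1 F" "smooth1 G"
    "\<And>x. x < a \<or> x > b \<Longrightarrow> F x = 0" "\<And>y. y < c \<or> y > d \<Longrightarrow> G y = 0"
  shows "integral UNIV (\<lambda>z. u z $ 1 * (dd F (z$1) * G (z$2)) + u z $ 2 * (F (z$1) * dd G (z$2))) = 0"
proof -
  have "integral UNIV (\<lambda>z. u z \<bullet> grad2 (phi2 F G) z) = 0"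
    using assms(1) phi2_test[OF assms(2-5)] unfolding weakly_div_free_def by blast
  then show ?thesis by (simp add: grad2_phi2[OF assms(2,3)] inner_vec_def sum_2)
qed


lemma vec2_eq: "(z::real^2) = vector [z$1, z$2]"
  by (simp add: vec_eq_iff forall_2)

lemma cbox2_empty: "cbox (a::real^2) b = {} \<longleftrightarrow> b$1 < a$1 \<or> b$2 < a$2"
  by (auto simp: mem_box_cart forall_2 set_eq_iff)

lemma content2: "content (cbox (a::real^2) b) = (if cbox a b = {} then 0 else (b$1 - a$1) * (b$2-a$2))"
  by (simp add: content_cbox_if_cart UNIV_2)

lemma img1: "(\<lambda>z::real^2. (z$1, z$2)) ` cbox u v = cbox (u$1, u$2) (v$1, v$2)"
proof
  show "(\<lambda>z::real^2. (z$1, z$2)) ` cbox u v \<subseteq> cbox (u$1, u$2) (v$1, v$2)"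
    by (auto simp: mem_box_cart cbox_Pair_eq)
  show "cbox (u$1, u$2) (v$1, v$2) \<subseteq> (\<lambda>z::real^2. (z$1, z$2)) ` cbox u v"
  proof
    fix p assume "p \<in> cbox (u$1, u$2) (v$1, v$2)"
    then have "vector [fst p, snd p] \<in> cbox u v" by (auto simp: mem_box_cart forall_2 cbox_Pair_eq)
    then show "p \<in> (\<lambda>z::real^2. (z$1, z$2)) ` cbox u v" by (intro image_eqI) auto
  qed
qed

lemma img2: "(\<lambda>z::real^2. (z$2, z$1)) ` cbox u v = cbox (u$2, u$1) (v$2, v$1)"
proof
  show "(\<lambda>z::real^2. (z$2, z$1)) ` cbox u v \<subseteq> cbox (u$2, u$1) (v$2, v$1)"
    by (auto simp: mem_box_cart cbox_Pair_eq)
  show "cbox (u$2, u$1) (v$2, v$1) \<subseteq> (\<lambda>z::real^2. (z$2, z$1)) ` cbox u v"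
  proof
    fix p assume "p \<in> cbox (u$2, u$1) (v$2, v$1)"
    then have "vector [snd p, fst p] \<in> cbox u v" by (auto simp: mem_box_cart forall_2 cbox_Pair_eq)
    then show "p \<in> (\<lambda>z::real^2. (z$2, z$1)) ` cbox u v" by (intro image_eqI) auto
  qed
qed

lemma img1i: "(\<lambda>p. vector [fst p, snd p] :: real^2) ` cbox (a, c) (b, d) = cbox (vector [a, c]) (vector [b, d])"
proof
  show "(\<lambda>p. vector [fst p, snd p] :: real^2) ` cbox (a, c) (b, d) \<subseteq> cbox (vector [a, c]) (vector [b, d])"
    by (auto simp: mem_box_cart forall_2 cbox_Pair_eq)
  show "cbox (vector [a, c]) (vector [b, d]) \<subseteq> (\<lambda>p. vector [fst p, snd p] :: real^2) ` cbox (a, c) (b, d)"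
  proof
    fix z :: "real^2" assume "z \<in> cbox (vector [a, c]) (vector [b, d])"
    then have "(z$1, z$2) \<in> cbox (a, c) (b, d)" by (auto simp: mem_box_cart forall_2 cbox_Pair_eq)
    then show "z \<in> (\<lambda>p. vector [fst p, snd p] :: real^2) ` cbox (a, c) (b, d)"
      by (intro image_eqI[where x="(z$1,z$2)"]) (auto simp: vec_eq_iff forall_2)
  qed
qed

lemma img2i: "(\<lambda>p. vector [snd p, fst p] :: real^2) ` cbox (c, a) (d, b) = cbox (vector [a, c]) (vector [b, d])"
proof
  show "(\<lambda>p. vector [snd p, fst p] :: real^2) ` cbox (c, a) (d, b) \<subseteq> cbox (vector [a, c]) (vector [b, d])"
    by (auto simp: mem_box_cart forall_2 cbox_Pair_eq)
  show "cbox (vector [a, c]) (vector [b, d]) \<subseteq> (\<lambda>p. vector [snd p, fst p] :: real^2) ` cbox (c, a) (d, b)"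
  proof
    fix z :: "real^2" assume "z \<in> cbox (vector [a, c]) (vector [b, d])"
    then have "(z$2, z$1) \<in> cbox (c, a) (d, b)" by (auto simp: mem_box_cart forall_2 cbox_Pair_eq)
    then show "z \<in> (\<lambda>p. vector [snd p, fst p] :: real^2) ` cbox (c, a) (d, b)"
      by (intro image_eqI[where x="(z$2,z$1)"]) (auto simp: vec_eq_iff forall_2)
  qed
qed

lemma img_gen1: "\<exists>w z. (\<lambda>p. vector [fst p, snd p] :: real^2) ` cbox u v = cbox w z"
  using img1i[of "fst u" "snd u" "fst v" "snd v"] by auto
lemma img_gen2: "\<exists>w z. (\<lambda>p. vector [snd p, fst p] :: real^2) ` cbox u v = cbox w z"
  using img2i[of "fst u" "snd u" "fst v" "snd v"] by auto

lemma cont_chi: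
  assumes "continuous_on S f1" "continuous_on S f2"
  shows "continuous_on S (\<lambda>p. \<chi> i::2. if i = 1 then (f1 p::real) else f2 p)"
proof (rule continuous_on_vec_lambda)
  fix i :: 2
  show "continuous_on S (\<lambda>p. if i = 1 then f1 p else f2 p)"
    by (cases "i = 1") (simp_all add: assms)
qed

lemma cont_vec1: "continuous_on S (\<lambda>p::real\<times>real. vector [fst p, snd p] :: real^2)"
proof -
  have "(\<lambda>p::real\<times>real. vector [fst p, snd p] :: real^2) = (\<lambda>p. \<chi> i. if i = 1 then fst p else snd p)"
    by (simp add: fun_eq_iff vec_eq_iff forall_2)
  moreover have "continuous_on S (\<lambda>p::real\<times>real. \<chi> i::2. if i = 1 then fst p else snd p)"
    by (rule cont_chi) (auto intro: continuous_intros)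
  moreover have "continuous_on S (\<lambda>p::real\<times>real. \<chi> i::2. if i = 1 then snd p else fst p)"
    by (rule cont_chi) (auto intro: continuous_intros)
  ultimately show ?thesis by metis
qed

lemma cont_vec2: "continuous_on S (\<lambda>p::real\<times>real. vector [snd p, fst p] :: real^2)"
proof -
  have "(\<lambda>p::real\<times>real. vector [snd p, fst p] :: real^2) = (\<lambda>p. \<chi> i. if i = 1 then snd p else fst p)"
    by (simp add: fun_eq_iff vec_eq_iff forall_2)
  moreover have "continuous_on S (\<lambda>p::real\<times>real. \<chi> i::2. if i = 1 then fst p else snd p)"
    by (rule cont_chi) (auto intro: continuous_intros)
  moreover have "continuous_on S (\<lambda>p::real\<times>real. \<chi> i::2. if i = 1 then snd p else fst p)"
    by (rule cont_chi) (auto intro: continuous_intros)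
  ultimately show ?thesis by metis
qed

lemma fubA:
  fixes f :: "real^2 \<Rightarrow> real"
  assumes cont: "continuous_on UNIV f" and "a \<le> b" "c \<le> d"
    and zero: "\<And>z. z \<notin> cbox (vector [a, c]) (vector [b, d]) \<Longrightarrow> f z = 0"
  shows "(f has_integral integral {a..b} (\<lambda>x. integral {c..d} (\<lambda>y. f (vector [x, y])))) UNIV"
proof -
  let ?F = "\<lambda>p. f (vector [fst p, snd p])"
  have cF: "continuous_on (cbox (a, c) (b, d)) ?F"
    by (rule continuous_on_compose2[OF cont cont_vec1]) auto
  have i1: "(?F has_integral integral (cbox (a, c) (b, d)) ?F) (cbox (a, c) (b, d))"
    using integrable_continuous[OF cF] by blast
  have eq: "integral (cbox (a, c) (b, d)) ?F = integral {a..b} (\<lambda>x. integral {c..d} (\<lambda>y. f (vector [x, y])))"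
    using integral_prod_continuous[OF cF] by (simp add: cbox_interval)
  have t: "((\<lambda>z::real^2. ?F (z$1, z$2)) has_integral (1 / 1) *\<^sub>R integral (cbox (a, c) (b, d)) ?F)
      ((\<lambda>p. vector [fst p, snd p] :: real^2) ` cbox (a, c) (b, d))"
  proof (rule has_integral_twiddle[OF _ _ _ _ _ img_gen1 _ i1])
    show "\<And>z::real^2. vector [fst (z$1, z$2), snd (z$1, z$2)] = z" by (simp add: vec_eq_iff forall_2)
    show "\<And>p. ((vector [fst p, snd p] :: real^2)$1, (vector [fst p, snd p] :: real^2)$2) = p" by simp
    show "\<And>x. continuous (at x) (\<lambda>z::real^2. (z$1, z$2))" by (intro continuous_intros)
    show "\<And>u v. \<exists>w z. (\<lambda>z::real^2. (z$1, z$2)) ` cbox u v = cbox w z" using img1 by blast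
    show "\<And>u v. content ((\<lambda>z::real^2. (z$1, z$2)) ` cbox u v) = 1 * content (cbox u v)"
      by (simp add: img1 content_Pair content2 cbox2_empty)
  qed simp
  then have "(f has_integral integral (cbox (a, c) (b, d)) ?F) (cbox (vector [a, c]) (vector [b, d]))"
    by (simp add: img1i flip: vec2_eq)
  then have "(f has_integral integral (cbox (a, c) (b, d)) ?F) UNIV"
    by (rule has_integral_on_superset) (use zero in auto)
  then show ?thesis using eq by simp
qed

lemma fubB:
  fixes f :: "real^2 \<Rightarrow> real"
  assumes cont: "continuous_on UNIV f" and "a \<le> b" "c \<le> d"
    and zero: "\<And>z. z \<notin> cbox (vector [a, c]) (vector [b, d]) \<Longrightarrow> f z = 0"
  shows "(f has_integral integral {c..d} (\<lambda>y. integral {a..b} (\<lambda>x. f (vector [x, y])))) UNIV"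
proof -
  let ?F = "\<lambda>p. f (vector [snd p, fst p])"
  have cF: "continuous_on (cbox (c, a) (d, b)) ?F"
    by (rule continuous_on_compose2[OF cont cont_vec2]) auto
  have i1: "(?F has_integral integral (cbox (c, a) (d, b)) ?F) (cbox (c, a) (d, b))"
    using integrable_continuous[OF cF] by blast
  have eq: "integral (cbox (c, a) (d, b)) ?F = integral {c..d} (\<lambda>y. integral {a..b} (\<lambda>x. f (vector [x, y])))"
    using integral_prod_continuous[OF cF] by (simp add: cbox_interval)
  have t: "((\<lambda>z::real^2. ?F (z$2, z$1)) has_integral (1 / 1) *\<^sub>R integral (cbox (c, a) (d, b)) ?F)
      ((\<lambda>p. vector [snd p, fst p] :: real^2) ` cbox (c, a) (d, b))"
  proof (rule has_integral_twiddle[OF _ _ _ _ _ img_gen2 _ i1])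
    show "\<And>z::real^2. vector [snd (z$2, z$1), fst (z$2, z$1)] = z" by (simp add: vec_eq_iff forall_2)
    show "\<And>p. ((vector [snd p, fst p] :: real^2)$2, (vector [snd p, fst p] :: real^2)$1) = p" by simp
    show "\<And>x. continuous (at x) (\<lambda>z::real^2. (z$2, z$1))" by (intro continuous_intros)
    show "\<And>u v. \<exists>w z. (\<lambda>z::real^2. (z$2, z$1)) ` cbox u v = cbox w z" using img2 by blast
    show "\<And>u v. content ((\<lambda>z::real^2. (z$2, z$1)) ` cbox u v) = 1 * content (cbox u v)"
      by (simp add: img2 content_Pair content2 cbox2_empty)
  qed simp
  then have "(f has_integral integral (cbox (c, a) (d, b)) ?F) (cbox (vector [a, c]) (vector [b, d]))"
    by (simp add: img2i flip: vec2_eq)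
  then have "(f has_integral integral (cbox (c, a) (d, b)) ?F) UNIV"
    by (rule has_integral_on_superset) (use zero in auto)
  then show ?thesis using eq by simp
qed


definition ker :: "real \<Rightarrow> real \<Rightarrow> real \<Rightarrow> real" where
  "ker \<alpha> \<epsilon> x = wt ((x - \<alpha>) / \<epsilon>) / \<epsilon>"

definition Fs :: "real \<Rightarrow> real \<Rightarrow> real \<Rightarrow> real \<Rightarrow> real" where
  "Fs a b \<epsilon> x = St ((x - a) / \<epsilon>) - St ((x - (b - \<epsilon>)) / \<epsilon>)"

lemma St_aff_deriv: "((\<lambda>x. St ((x - \<alpha>) / \<epsilon>)) has_real_derivative ker \<alpha> \<epsilon> x) (at x)"
proof -
  have "((\<lambda>x. (x - \<alpha>) / \<epsilon>) has_real_derivative (1 - 0)/\<epsilon>) (at x)"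
    by (intro DERIV_cdivide DERIV_diff DERIV_ident DERIV_const)
  from DERIV_chain2[OF St_deriv this] show ?thesis by (simp add: ker_def)
qed

lemma smooth1_St_aff: "smooth1 (\<lambda>x. St ((x - \<alpha>) / \<epsilon>))"
proof -
  have "(\<lambda>x. St ((x - \<alpha>) / \<epsilon>)) = (\<lambda>x. St ((1/\<epsilon>) * x + (- \<alpha> / \<epsilon>)))"
    by (rule ext) (simp add: diff_divide_distrib)
  then show ?thesis using smooth1_affine[OF smooth1_St] by metis
qed

lemma smooth1_Fs: "smooth1 (Fs a b \<epsilon>)"
  unfolding Fs_def by (rule smooth1_diff[OF smooth1_St_aff smooth1_St_aff])

lemma Fs_deriv: "(Fs a b \<epsilon> has_real_derivative ker a \<epsilon> x - ker (b - \<epsilon>) \<epsilon> x) (at x)"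
  unfolding Fs_def by (intro DERIV_diff St_aff_deriv)

lemma dd_Fs: "dd (Fs a b \<epsilon>) x = ker a \<epsilon> x - ker (b - \<epsilon>) \<epsilon> x"
  using DERIV_unique[OF smooth1_dd(1)[OF smooth1_Fs] Fs_deriv] .

lemma ker_nonneg: "\<epsilon> > 0 \<Longrightarrow> ker \<alpha> \<epsilon> x \<ge> 0"
  by (simp add: ker_def wt_nonneg)

lemma ker_zero: "\<epsilon> > 0 \<Longrightarrow> x \<le> \<alpha> \<or> x \<ge> \<alpha> + \<epsilon> \<Longrightarrow> ker \<alpha> \<epsilon> x = 0"
  by (auto simp: ker_def intro!: wt_zero simp: field_simps)

lemma ker_cont': "continuous_on S (ker \<alpha> \<epsilon>)"
proof -
  have "continuous_on S (\<lambda>x. wt ((x - \<alpha>) / \<epsilon>))"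
    by (rule continuous_on_compose2[OF smooth1_cont[OF smooth1_wt]]) (auto simp: divide_inverse intro!: continuous_intros)
  then show ?thesis unfolding ker_def divide_inverse[of "wt _"]
    by (intro continuous_on_mult_right)
qed

lemma ker_int:
  assumes "\<epsilon> > 0" "a \<le> \<alpha>" "\<alpha> + \<epsilon> \<le> b"
  shows "(ker \<alpha> \<epsilon> has_integral 1) {a..b}"
proof -
  have "(ker \<alpha> \<epsilon> has_integral (St ((b - \<alpha>) / \<epsilon>) - St ((a - \<alpha>) / \<epsilon>))) {a..b}"
    apply (rule fundamental_theorem_of_calculus)
    using assms apply simp
    using St_aff_deriv has_real_derivative_iff_has_vector_derivative
    by (metis has_vector_derivative_at_within)
  moreover have "St ((b - \<alpha>) / \<epsilon>) = 1" using assms by (intro St_ge1) (simp add: field_simps)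
  moreover have "St ((a - \<alpha>) / \<epsilon>) = 0" using assms by (intro St_le0) (simp add: field_simps)
  ultimately show ?thesis by simp
qed

lemma delta_est:
  fixes p :: "real \<Rightarrow> real"
  assumes "\<epsilon> > 0" "a \<le> \<alpha>" "\<alpha> + \<epsilon> \<le> b" "continuous_on {a..b} p"
    and close: "\<And>x. \<alpha> \<le> x \<Longrightarrow> x \<le> \<alpha> + \<epsilon> \<Longrightarrow> \<bar>p x - p0\<bar> \<le> e"
  shows "\<bar>integral {a..b} (\<lambda>x. p x * ker \<alpha> \<epsilon> x) - p0\<bar> \<le> e"
proof -
  have kc: "continuous_on {a..b} (ker \<alpha> \<epsilon>)" by (rule ker_cont')
  have ki: "(ker \<alpha> \<epsilon> has_integral 1) {a..b}" by (rule ker_int[OF assms(1-3)])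
  have i1: "(\<lambda>x. p x * ker \<alpha> \<epsilon> x) integrable_on {a..b}"
    by (intro integrable_continuous_interval continuous_intros assms(4) kc)
  have i2: "(\<lambda>x. p0 * ker \<alpha> \<epsilon> x) integrable_on {a..b}"
    by (intro integrable_continuous_interval continuous_intros kc)
  have i3: "(\<lambda>x. e * ker \<alpha> \<epsilon> x) integrable_on {a..b}"
    by (intro integrable_continuous_interval continuous_intros kc)
  have e2: "integral {a..b} (\<lambda>x. p0 * ker \<alpha> \<epsilon> x) = p0"
    using integral_mult[OF has_integral_integrable[OF ki], of p0] integral_unique[OF ki] by simp
  have e3: "integral {a..b} (\<lambda>x. e * ker \<alpha> \<epsilon> x) = e"
    using integral_mult[OF has_integral_integrable[OF ki], of e] integral_unique[OF ki] by simp
  have "integral {a..b} (\<lambda>x. p x * ker \<alpha> \<epsilon> x) - p0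
        = integral {a..b} (\<lambda>x. p x * ker \<alpha> \<epsilon> x - p0 * ker \<alpha> \<epsilon> x)"
    using integral_diff[OF i1 i2] e2 by simp
  also have "\<bar>\<dots>\<bar> \<le> integral {a..b} (\<lambda>x. e * ker \<alpha> \<epsilon> x)"
  proof -
    have "norm (integral {a..b} (\<lambda>x. p x * ker \<alpha> \<epsilon> x - p0 * ker \<alpha> \<epsilon> x)) \<le> integral {a..b} (\<lambda>x. e * ker \<alpha> \<epsilon> x)"
    proof (rule integral_norm_bound_integral)
      show "(\<lambda>x. p x * ker \<alpha> \<epsilon> x - p0 * ker \<alpha> \<epsilon> x) integrable_on {a..b}"
        using integrable_diff[OF i1 i2] .
      show "(\<lambda>x. e * ker \<alpha> \<epsilon> x) integrable_on {a..b}" by (rule i3)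
      fix x assume "x \<in> {a..b}"
      show "norm (p x * ker \<alpha> \<epsilon> x - p0 * ker \<alpha> \<epsilon> x) \<le> e * ker \<alpha> \<epsilon> x"
      proof (cases "\<alpha> \<le> x \<and> x \<le> \<alpha> + \<epsilon>")
        case True
        have "\<bar>p x * ker \<alpha> \<epsilon> x - p0 * ker \<alpha> \<epsilon> x\<bar> = \<bar>p x - p0\<bar> * ker \<alpha> \<epsilon> x"
          using ker_nonneg[OF assms(1)] by (simp add: abs_mult left_diff_distrib[symmetric])
        also have "\<dots> \<le> e * ker \<alpha> \<epsilon> x"
          using close True ker_nonneg[OF assms(1)] by (simp add: mult_right_mono)
        finally show ?thesis by simp
      next
        case False
        then have "ker \<alpha> \<epsilon> x = 0" using ker_zero[OF assms(1)] by auto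
        then show ?thesis by simp
      qed
    qed
    then show ?thesis by simp
  qed
  finally show ?thesis using e3 by (simp only:)
qed

lemma Fs_props:
  assumes "\<epsilon> > 0" "a + 2 * \<epsilon> \<le> b"
  shows "x \<le> a \<Longrightarrow> Fs a b \<epsilon> x = 0"
    and "x \<ge> b \<Longrightarrow> Fs a b \<epsilon> x = 0"
    and "a + \<epsilon> \<le> x \<Longrightarrow> x \<le> b - \<epsilon> \<Longrightarrow> Fs a b \<epsilon> x = 1"
    and "0 \<le> Fs a b \<epsilon> x" and "Fs a b \<epsilon> x \<le> 1"
proof -
  show "x \<le> a \<Longrightarrow> Fs a b \<epsilon> x = 0"
    using assms by (simp add: Fs_def St_le0 divide_nonpos_pos)
  show "x \<ge> b \<Longrightarrow> Fs a b \<epsilon> x = 0"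
    using assms by (simp add: Fs_def St_ge1 le_divide_eq)
  show "a + \<epsilon> \<le> x \<Longrightarrow> x \<le> b - \<epsilon> \<Longrightarrow> Fs a b \<epsilon> x = 1"
    using assms by (simp add: Fs_def St_ge1 St_le0 le_divide_eq divide_nonpos_pos)
  have "0 \<le> Fs a b \<epsilon> x \<and> Fs a b \<epsilon> x \<le> 1"
  proof (cases "x \<le> b - \<epsilon>")
    case True
    then have "St ((x - (b - \<epsilon>)) / \<epsilon>) = 0" using assms by (simp add: St_le0 divide_nonpos_pos)
    then show ?thesis using St_nonneg St_le1 by (simp add: Fs_def)
  next
    case False
    then have "St ((x - a) / \<epsilon>) = 1" using assms by (simp add: St_ge1 le_divide_eq)
    then show ?thesis using St_nonneg St_le1 by (simp add: Fs_def)
  qed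
  then show "0 \<le> Fs a b \<epsilon> x" "Fs a b \<epsilon> x \<le> 1" by auto
qed

lemma Fs_cont: "continuous_on S (Fs a b \<epsilon>)"
  by (rule smooth1_cont[OF smooth1_Fs])

lemma step_est:
  fixes p :: "real \<Rightarrow> real"
  assumes ep: "\<epsilon> > 0" "a + 2 * \<epsilon> \<le> b" and pc: "continuous_on {a..b} p"
    and pM: "\<And>x. x \<in> {a..b} \<Longrightarrow> \<bar>p x\<bar> \<le> M"
  shows "\<bar>integral {a..b} (\<lambda>x. p x * Fs a b \<epsilon> x) - integral {a..b} p\<bar> \<le> 2 * \<epsilon> * M"
proof -
  define g where "g x = p x * Fs a b \<epsilon> x - p x" for x
  have gc: "continuous_on {a..b} g" unfolding g_def
    by (intro continuous_intros pc Fs_cont)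
  have gi: "g integrable_on {a..b}" by (rule integrable_continuous_interval[OF gc])
  have i1: "(\<lambda>x. p x * Fs a b \<epsilon> x) integrable_on {a..b}"
    by (intro integrable_continuous_interval continuous_intros pc Fs_cont)
  have i2: "p integrable_on {a..b}" by (rule integrable_continuous_interval[OF pc])
  have eqd: "integral {a..b} (\<lambda>x. p x * Fs a b \<epsilon> x) - integral {a..b} p = integral {a..b} g"
    unfolding g_def using integral_diff[OF i1 i2] by simp
  have gM: "\<bar>g x\<bar> \<le> M" if "x \<in> {a..b}" for x
  proof -
    have "\<bar>g x\<bar> = \<bar>p x\<bar> * \<bar>Fs a b \<epsilon> x - 1\<bar>" by (simp add: g_def abs_mult[symmetric] algebra_simps)
    also have "\<dots> \<le> \<bar>p x\<bar> * 1"
      using Fs_props(4,5)[OF ep, of x] by (intro mult_left_mono) auto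
    finally show ?thesis using pM[OF that] by simp
  qed
  have c1: "integral {a..a+\<epsilon>} g + integral {a+\<epsilon>..b} g = integral {a..b} g"
    by (rule Henstock_Kurzweil_Integration.integral_combine) (use ep gi in auto)
  have gi2: "g integrable_on {a+\<epsilon>..b}"
    by (rule integrable_subinterval_real[OF gi]) (use ep in auto)
  have c2: "integral {a+\<epsilon>..b-\<epsilon>} g + integral {b-\<epsilon>..b} g = integral {a+\<epsilon>..b} g"
    by (rule Henstock_Kurzweil_Integration.integral_combine) (use ep gi2 in auto)
  have m0: "integral {a+\<epsilon>..b-\<epsilon>} g = 0"
  proof -
    have "integral {a+\<epsilon>..b-\<epsilon>} g = integral {a+\<epsilon>..b-\<epsilon>} (\<lambda>_. 0::real)"
      by (rule integral_cong) (simp add: g_def Fs_props(3)[OF ep])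
    then show ?thesis by simp
  qed
  have b1: "\<bar>integral {a..a+\<epsilon>} g\<bar> \<le> M * (a + \<epsilon> - a)"
    using integral_bound[of a "a+\<epsilon>" g M] continuous_on_subset[OF gc, of "{a..a+\<epsilon>}"] gM ep by auto
  have b2: "\<bar>integral {b-\<epsilon>..b} g\<bar> \<le> M * (b - (b - \<epsilon>))"
    using integral_bound[of "b-\<epsilon>" b g M] continuous_on_subset[OF gc, of "{b-\<epsilon>..b}"] gM ep by auto
  have e: "M * (a + \<epsilon> - a) + M * (b - (b - \<epsilon>)) = 2 * \<epsilon> * M" by (simp add: algebra_simps)
  show ?thesis
    using eqd c1 c2 m0 b1 b2 e abs_triangle_ineq[of "integral {a..a+\<epsilon>} g" "integral {b-\<epsilon>..b} g"]
    by linarith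
qed


lemma cont_slice1: "continuous_on UNIV (\<lambda>z. P (fst z) (snd z)) \<Longrightarrow> continuous_on S (P t)"
  by (rule continuous_on_compose2[of UNIV "\<lambda>z. P (fst z) (snd z)" S "\<lambda>s. (t, s)", simplified])
    (auto intro!: continuous_intros)

lemma half_est:
  fixes P :: "real \<Rightarrow> real \<Rightarrow> real"
  assumes PC: "continuous_on UNIV (\<lambda>z. P (fst z) (snd z))"
    and ep: "\<epsilon> > 0" "a + 2 * \<epsilon> \<le> b" "c + 2 * \<epsilon> \<le> d"
    and PM: "\<And>t s. t \<in> {c..d} \<Longrightarrow> s \<in> {a..b} \<Longrightarrow> \<bar>P t s\<bar> \<le> M"
    and PU: "\<And>t s s'. t \<in> {c..d} \<Longrightarrow> s \<in> {a..b} \<Longrightarrow> s' \<in> {a..b} \<Longrightarrow> \<bar>s - s'\<bar> \<le> \<epsilon> \<Longrightarrow> \<bar>P t s - P t s'\<bar> \<le> e"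
  shows "\<bar>integral {c..d} (\<lambda>t. integral {a..b} (\<lambda>s. P t s * (ker a \<epsilon> s - ker (b - \<epsilon>) \<epsilon> s)) * Fs c d \<epsilon> t)
          - integral {c..d} (\<lambda>t. P t a - P t b)\<bar> \<le> 2 * e * (d - c) + 4 * \<epsilon> * M"
proof -
  define K where "K s = ker a \<epsilon> s - ker (b - \<epsilon>) \<epsilon> s" for s
  define h where "h t = integral {a..b} (\<lambda>s. P t s * K s)" for t
  define q where "q t = P t a - P t b" for t
  define G where "G = Fs c d \<epsilon>"
  have Kc: "continuous_on S K" for S unfolding K_def by (intro continuous_intros ker_cont')
  have Pt: "continuous_on S (P t)" for S t by (rule cont_slice1[OF PC])
  have hclose: "\<bar>h t - q t\<bar> \<le> 2 * e" if t: "t \<in> {c..d}" for t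
  proof -
    have i1: "(\<lambda>s. P t s * ker a \<epsilon> s) integrable_on {a..b}"
      by (intro integrable_continuous_interval continuous_intros Pt ker_cont')
    have i2: "(\<lambda>s. P t s * ker (b - \<epsilon>) \<epsilon> s) integrable_on {a..b}"
      by (intro integrable_continuous_interval continuous_intros Pt ker_cont')
    have "h t = integral {a..b} (\<lambda>s. P t s * ker a \<epsilon> s) - integral {a..b} (\<lambda>s. P t s * ker (b - \<epsilon>) \<epsilon> s)"
      unfolding h_def K_def using integral_diff[OF i1 i2] by (simp add: algebra_simps)
    moreover have "\<bar>integral {a..b} (\<lambda>s. P t s * ker a \<epsilon> s) - P t a\<bar> \<le> e"
      by (rule delta_est[OF ep(1) _ _ Pt]) (use ep PU t in auto)
    moreover have "\<bar>integral {a..b} (\<lambda>s. P t s * ker (b - \<epsilon>) \<epsilon> s) - P t b\<bar> \<le> e"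
      by (rule delta_est[OF ep(1) _ _ Pt]) (use ep PU t in auto)
    ultimately show ?thesis unfolding q_def by linarith
  qed
  have hc: "continuous_on {c..d} h"
  proof -
    have "continuous_on ({c..d} \<times> cbox a b) (\<lambda>(t, s). P t s * K s)"
    proof -
      have "continuous_on ({c..d} \<times> cbox a b) (\<lambda>z. P (fst z) (snd z) * K (snd z))"
        by (intro continuous_intros continuous_on_subset[OF PC] continuous_on_compose2[OF Kc]) auto
      then show ?thesis by (simp add: case_prod_beta')
    qed
    from integral_continuous_on_param[OF this] show ?thesis by (simp add: h_def cbox_interval)
  qed
  have qc: "continuous_on {c..d} q"
  proof -
    have "continuous_on {c..d} (\<lambda>t. P t a)"
      by (rule continuous_on_compose2[of UNIV "\<lambda>z. P (fst z) (snd z)" _ "\<lambda>t. (t, a)", simplified, OF PC])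
        (auto intro!: continuous_intros)
    moreover have "continuous_on {c..d} (\<lambda>t. P t b)"
      by (rule continuous_on_compose2[of UNIV "\<lambda>z. P (fst z) (snd z)" _ "\<lambda>t. (t, b)", simplified, OF PC])
        (auto intro!: continuous_intros)
    ultimately show ?thesis unfolding q_def by (intro continuous_intros)
  qed
  have Gc: "continuous_on S G" for S unfolding G_def by (rule Fs_cont)
  have G01: "0 \<le> G t" "G t \<le> 1" for t unfolding G_def using Fs_props(4,5)[OF ep(1,3)] by auto
  have cd: "c \<le> d" using ep by simp
  have ih: "(\<lambda>t. h t * G t) integrable_on {c..d}" by (intro integrable_continuous_interval continuous_intros hc Gc)
  have iq: "(\<lambda>t. q t * G t) integrable_on {c..d}" by (intro integrable_continuous_interval continuous_intros qc Gc)
  have A1: "\<bar>integral {c..d} (\<lambda>t. h t * G t) - integral {c..d} (\<lambda>t. q t * G t)\<bar> \<le> 2 * e * (d - c)"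
  proof -
    have "integral {c..d} (\<lambda>t. h t * G t) - integral {c..d} (\<lambda>t. q t * G t) = integral {c..d} (\<lambda>t. (h t - q t) * G t)"
      using integral_diff[OF ih iq] by (simp add: algebra_simps)
    also have "norm \<dots> \<le> (2 * e) * (d - c)"
    proof (rule integral_bound[OF cd])
      show "continuous_on {c..d} (\<lambda>t. (h t - q t) * G t)" by (intro continuous_intros hc qc Gc)
      fix t assume t: "t \<in> {c..d}"
      have "\<bar>(h t - q t) * G t\<bar> = \<bar>h t - q t\<bar> * G t" using G01 by (simp add: abs_mult)
      also have "\<dots> \<le> 2 * e * 1" using hclose[OF t] G01[of t] by (intro mult_mono) auto
      finally show "norm ((h t - q t) * G t) \<le> 2 * e" by simp
    qed
    finally show ?thesis by simp
  qed
  have A2: "\<bar>integral {c..d} (\<lambda>t. q t * G t) - integral {c..d} q\<bar> \<le> 2 * \<epsilon> * (2 * M)"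
    unfolding G_def
  proof (rule step_est[OF ep(1,3) qc])
    fix t assume "t \<in> {c..d}"
    moreover have "a \<in> {a..b}" "b \<in> {a..b}" using ep by auto
    ultimately show "\<bar>q t\<bar> \<le> 2 * M" unfolding q_def using PM by (smt (verit))
  qed
  show ?thesis using A1 A2 unfolding h_def K_def G_def q_def by (simp add: algebra_simps)
qed


lemma dist_vec2: "dist (vector [x, y] :: real^2) (vector [x', y']) \<le> \<bar>x - x'\<bar> + \<bar>y - y'\<bar>"
proof -
  have "dist (vector [x, y] :: real^2) (vector [x', y']) = norm (vector [x, y] - vector [x', y'] :: real^2)"
    by (simp add: dist_norm)
  also have "\<dots> \<le> (\<Sum>i\<in>UNIV. \<bar>(vector [x, y] - vector [x', y'] :: real^2) $ i\<bar>)"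
    by (rule norm_le_l1_cart)
  also have "\<dots> = \<bar>x - x'\<bar> + \<bar>y - y'\<bar>" by (simp add: sum_2)
  finally show ?thesis .
qed

lemma cont_comp1: assumes "continuous_on UNIV (u::real^2\<Rightarrow>real^2)"
  shows "continuous_on UNIV (\<lambda>z. (\<lambda>t s. u (vector [s, t]) $ i) (fst z) (snd z))"
proof -
  have "continuous_on UNIV (\<lambda>p::real\<times>real. u (vector [snd p, fst p]))"
    by (rule continuous_on_compose2[OF assms cont_vec2]) auto
  then show ?thesis by (simp add: continuous_on_component)
qed

lemma cont_comp2: assumes "continuous_on UNIV (u::real^2\<Rightarrow>real^2)"
  shows "continuous_on UNIV (\<lambda>z. (\<lambda>t s. u (vector [t, s]) $ i) (fst z) (snd z))"
proof -
  have "continuous_on UNIV (\<lambda>p::real\<times>real. u (vector [fst p, snd p]))"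
    by (rule continuous_on_compose2[OF assms cont_vec1]) auto
  then show ?thesis by (simp add: continuous_on_component)
qed

lemma flux_box:
  fixes u :: "real^2 \<Rightarrow> real^2"
  assumes uc: "continuous_on UNIV u" and wd: "weakly_div_free u" and ab: "a < b" and cd: "c < d"
  shows "integral {c..d} (\<lambda>y. u (vector [b, y]) $ 1 - u (vector [a, y]) $ 1)
       + integral {a..b} (\<lambda>x. u (vector [x, d]) $ 2 - u (vector [x, c]) $ 2) = 0"
    (is "?\<Phi> = 0")
proof -
  define K where "K = cbox (vector [a, c]) (vector [b, d] :: real^2)"
  have inK: "vector [x, y] \<in> K" if "x \<in> {a..b}" "y \<in> {c..d}" for x y
    using that by (simp add: K_def mem_box_cart forall_2)
  have "bounded (u ` K)"
    by (rule compact_imp_bounded, rule compact_continuous_image)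
      (use uc in \<open>auto simp: K_def intro: continuous_on_subset\<close>)
  then obtain M where M: "M > 0" "\<And>z. z \<in> K \<Longrightarrow> norm (u z) \<le> M"
    unfolding bounded_pos by auto
  have Mi: "\<bar>u z $ i\<bar> \<le> M" if "z \<in> K" for z i
    using component_le_norm_cart[of "u z" i] M(2)[OF that] by linarith
  have uu: "uniformly_continuous_on K u"
    by (rule compact_uniformly_continuous) (use uc in \<open>auto simp: K_def intro: continuous_on_subset\<close>)
  have bound: "\<bar>?\<Phi>\<bar> \<le> \<eta>" if \<eta>: "\<eta> > 0" for \<eta>
  proof -
    define e where "e = \<eta> / (4 * ((b - a) + (d - c)))"
    have e: "e > 0" using \<eta> ab cd by (simp add: e_def)
    obtain \<delta> where \<delta>: "\<delta> > 0" "\<And>z z'. z \<in> K \<Longrightarrow> z' \<in> K \<Longrightarrow> dist z' z < \<delta> \<Longrightarrow> dist (u z') (u z) < e"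
      using uu e unfolding uniformly_continuous_on_def by metis
    have ucl: "\<bar>u z' $ i - u z $ i\<bar> \<le> e" if "z \<in> K" "z' \<in> K" "dist z' z < \<delta>" for z z' i
    proof -
      have "\<bar>u z' $ i - u z $ i\<bar> \<le> norm (u z' - u z)"
        using component_le_norm_cart[of "u z' - u z" i] by simp
      also have "\<dots> < e" using \<delta>(2)[OF that] by (simp add: dist_norm)
      finally show ?thesis by simp
    qed
    define \<epsilon> where "\<epsilon> = min (\<delta> / 2) (min ((b - a) / 2) (min ((d - c) / 2) (\<eta> / (16 * M))))"
    have ep: "\<epsilon> > 0" "a + 2 * \<epsilon> \<le> b" "c + 2 * \<epsilon> \<le> d" "\<epsilon> < \<delta>" "8 * \<epsilon> * M \<le> \<eta> / 2"
    proof -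
      show "\<epsilon> > 0" using \<delta> ab cd \<eta> M by (simp add: \<epsilon>_def)
      have "\<epsilon> \<le> (b - a) / 2" "\<epsilon> \<le> (d - c) / 2" "\<epsilon> \<le> \<delta> / 2"
        unfolding \<epsilon>_def by (meson min.cobounded1 min.cobounded2 order.trans)+
      then show "a + 2 * \<epsilon> \<le> b" "c + 2 * \<epsilon> \<le> d" "\<epsilon> < \<delta>" using \<delta> by auto
      have "\<epsilon> \<le> \<eta> / (16 * M)" by (simp add: \<epsilon>_def)
      then have "8 * M * \<epsilon> \<le> 8 * M * (\<eta> / (16 * M))" using M by (intro mult_left_mono) auto
      also have "\<dots> = \<eta> / 2" using M by (simp add: field_simps)
      finally show "8 * \<epsilon> * M \<le> \<eta> / 2" by (simp add: algebra_simps)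
    qed
    define F where "F = Fs a b \<epsilon>"
    define G where "G = Fs c d \<epsilon>"
    define KA where "KA x = ker a \<epsilon> x - ker (b - \<epsilon>) \<epsilon> x" for x
    define KB where "KB y = ker c \<epsilon> y - ker (d - \<epsilon>) \<epsilon> y" for y
    define A where "A z = u z $ 1 * (KA (z$1) * G (z$2))" for z
    define B where "B z = u z $ 2 * (F (z$1) * KB (z$2))" for z
    have F0: "F x = 0" if "x < a \<or> x > b" for x using that Fs_props(1,2)[OF ep(1,2)] by (auto simp: F_def)
    have G0: "G y = 0" if "y < c \<or> y > d" for y using that Fs_props(1,2)[OF ep(1,3)] by (auto simp: G_def)
    have KA0: "KA x = 0" if "x < a \<or> x > b" for x
      using that ker_zero[OF ep(1), of x a] ker_zero[OF ep(1), of x "b - \<epsilon>"] ep by (auto simp: KA_def)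
    have KB0: "KB y = 0" if "y < c \<or> y > d" for y
      using that ker_zero[OF ep(1), of y c] ker_zero[OF ep(1), of y "d - \<epsilon>"] ep by (auto simp: KB_def)
    have weak: "integral UNIV (\<lambda>z. A z + B z) = 0"
    proof -
      have F0': "\<And>x. x < a \<or> x > b \<Longrightarrow> Fs a b \<epsilon> x = 0" using F0 unfolding F_def .
      have G0': "\<And>y. y < c \<or> y > d \<Longrightarrow> Fs c d \<epsilon> y = 0" using G0 unfolding G_def .
      show ?thesis
        using weak_phi2[OF wd smooth1_Fs[of a b \<epsilon>] smooth1_Fs[of c d \<epsilon>] F0' G0']
        unfolding A_def B_def F_def G_def KA_def KB_def dd_Fs .
    qed
    have KAc: "continuous_on S KA" for S unfolding KA_def by (intro continuous_intros ker_cont')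
    have KBc: "continuous_on S KB" for S unfolding KB_def by (intro continuous_intros ker_cont')
    have Fc: "continuous_on S F" for S unfolding F_def by (rule Fs_cont)
    have Gc: "continuous_on S G" for S unfolding G_def by (rule Fs_cont)
    have outK: "z$1 < a \<or> z$1 > b \<or> z$2 < c \<or> z$2 > d" if "z \<notin> cbox (vector [a, c]) (vector [b, d])" for z :: "real^2"
      using that by (auto simp: mem_box_cart forall_2)
    have c1: "continuous_on UNIV (\<lambda>z::real^2. z $ i)" for i by (intro continuous_intros)
    have cKA: "continuous_on UNIV (\<lambda>z::real^2. KA (z$1))" by (rule continuous_on_compose2[OF KAc c1]) auto
    have cKB: "continuous_on UNIV (\<lambda>z::real^2. KB (z$2))" by (rule continuous_on_compose2[OF KBc c1]) auto
    have cF: "continuous_on UNIV (\<lambda>z::real^2. F (z$1))" by (rule continuous_on_compose2[OF Fc c1]) auto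
    have cG: "continuous_on UNIV (\<lambda>z::real^2. G (z$2))" by (rule continuous_on_compose2[OF Gc c1]) auto
    have cu: "continuous_on UNIV (\<lambda>z. u z $ i)" for i by (intro continuous_intros uc)
    have Ac: "continuous_on UNIV A" unfolding A_def
      by (intro continuous_on_mult cu cKA cG)
    have Bc: "continuous_on UNIV B" unfolding B_def
      by (intro continuous_on_mult cu cKB cF)
    have Az: "A z = 0" if "z \<notin> cbox (vector [a, c]) (vector [b, d])" for z
    proof -
      from outK[OF that] have "KA (z$1) = 0 \<or> G (z$2) = 0" using KA0 G0 by blast
      then show ?thesis by (auto simp: A_def)
    qed
    have Bz: "B z = 0" if "z \<notin> cbox (vector [a, c]) (vector [b, d])" for z
    proof -
      from outK[OF that] have "F (z$1) = 0 \<or> KB (z$2) = 0" using KB0 F0 by blast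
      then show ?thesis by (auto simp: B_def)
    qed
    have IA: "(A has_integral integral {c..d} (\<lambda>y. integral {a..b} (\<lambda>x. A (vector [x, y])))) UNIV"
      by (rule fubB[OF Ac _ _ Az]) (use ab cd in auto)
    have IB: "(B has_integral integral {a..b} (\<lambda>x. integral {c..d} (\<lambda>y. B (vector [x, y])))) UNIV"
      by (rule fubA[OF Bc _ _ Bz]) (use ab cd in auto)
    have sum0: "integral {c..d} (\<lambda>y. integral {a..b} (\<lambda>x. A (vector [x, y])))
              + integral {a..b} (\<lambda>x. integral {c..d} (\<lambda>y. B (vector [x, y]))) = 0"
      using integral_unique[OF has_integral_add[OF IA IB]] weak by simp
    have XA: "integral {c..d} (\<lambda>y. integral {a..b} (\<lambda>x. A (vector [x, y])))
       = integral {c..d} (\<lambda>t. integral {a..b} (\<lambda>s. u (vector [s, t]) $ 1 * (ker a \<epsilon> s - ker (b - \<epsilon>) \<epsilon> s)) * Fs c d \<epsilon> t)"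
    proof -
      have "integral {a..b} (\<lambda>x. A (vector [x, y])) =
            integral {a..b} (\<lambda>s. u (vector [s, y]) $ 1 * (ker a \<epsilon> s - ker (b - \<epsilon>) \<epsilon> s)) * Fs c d \<epsilon> y" for y
        using Henstock_Kurzweil_Integration.integral_mult_left[of "{a..b}" "\<lambda>s. u (vector [s, y]) $ 1 * (ker a \<epsilon> s - ker (b - \<epsilon>) \<epsilon> s)" "Fs c d \<epsilon> y"]
        by (simp add: A_def KA_def G_def mult.assoc)
      then show ?thesis by simp
    qed
    have XB: "integral {a..b} (\<lambda>x. integral {c..d} (\<lambda>y. B (vector [x, y])))
       = integral {a..b} (\<lambda>t. integral {c..d} (\<lambda>s. u (vector [t, s]) $ 2 * (ker c \<epsilon> s - ker (d - \<epsilon>) \<epsilon> s)) * Fs a b \<epsilon> t)"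
    proof -
      have "integral {c..d} (\<lambda>y. B (vector [x, y])) =
            integral {c..d} (\<lambda>s. u (vector [x, s]) $ 2 * (ker c \<epsilon> s - ker (d - \<epsilon>) \<epsilon> s)) * Fs a b \<epsilon> x" for x
        using Henstock_Kurzweil_Integration.integral_mult_left[of "{c..d}" "\<lambda>s. u (vector [x, s]) $ 2 * (ker c \<epsilon> s - ker (d - \<epsilon>) \<epsilon> s)" "Fs a b \<epsilon> x"]
        by (simp add: B_def KB_def F_def algebra_simps)
      then show ?thesis by simp
    qed
    have HA: "\<bar>integral {c..d} (\<lambda>t. integral {a..b} (\<lambda>s. u (vector [s, t]) $ 1 * (ker a \<epsilon> s - ker (b - \<epsilon>) \<epsilon> s)) * Fs c d \<epsilon> t)
          - integral {c..d} (\<lambda>t. u (vector [a, t]) $ 1 - u (vector [b, t]) $ 1)\<bar> \<le> 2 * e * (d - c) + 4 * \<epsilon> * M"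
    proof (rule half_est[where P="\<lambda>t s. u (vector [s, t]) $ 1", OF cont_comp1[OF uc] ep(1-3)])
      show "\<bar>u (vector [s, t]) $ 1\<bar> \<le> M" if "t \<in> {c..d}" "s \<in> {a..b}" for t s
        using Mi inK that by blast
      show "\<bar>u (vector [s, t]) $ 1 - u (vector [s', t]) $ 1\<bar> \<le> e"
        if "t \<in> {c..d}" "s \<in> {a..b}" "s' \<in> {a..b}" "\<bar>s - s'\<bar> \<le> \<epsilon>" for t s s'
      proof (rule ucl)
        show "vector [s', t] \<in> K" "vector [s, t] \<in> K" using inK that by auto
        show "dist (vector [s, t]) (vector [s', t] :: real^2) < \<delta>"
          using dist_vec2[of s t s' t] that ep(4) by simp
      qed
    qed
    have HB: "\<bar>integral {a..b} (\<lambda>t. integral {c..d} (\<lambda>s. u (vector [t, s]) $ 2 * (ker c \<epsilon> s - ker (d - \<epsilon>) \<epsilon> s)) * Fs a b \<epsilon> t)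
          - integral {a..b} (\<lambda>t. u (vector [t, c]) $ 2 - u (vector [t, d]) $ 2)\<bar> \<le> 2 * e * (b - a) + 4 * \<epsilon> * M"
    proof (rule half_est[where P="\<lambda>t s. u (vector [t, s]) $ 2", OF cont_comp2[OF uc] ep(1) ep(3) ep(2)])
      show "\<bar>u (vector [t, s]) $ 2\<bar> \<le> M" if "t \<in> {a..b}" "s \<in> {c..d}" for t s
        using Mi inK that by blast
      show "\<bar>u (vector [t, s]) $ 2 - u (vector [t, s']) $ 2\<bar> \<le> e"
        if "t \<in> {a..b}" "s \<in> {c..d}" "s' \<in> {c..d}" "\<bar>s - s'\<bar> \<le> \<epsilon>" for t s s'
      proof (rule ucl)
        show "vector [t, s'] \<in> K" "vector [t, s] \<in> K" using inK that by auto
        show "dist (vector [t, s]) (vector [t, s'] :: real^2) < \<delta>"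
          using dist_vec2[of t s t s'] that ep(4) by simp
      qed
    qed
    have N1: "integral {c..d} (\<lambda>t. u (vector [a, t]) $ 1 - u (vector [b, t]) $ 1)
            = - integral {c..d} (\<lambda>y. u (vector [b, y]) $ 1 - u (vector [a, y]) $ 1)"
      by (subst integral_neg[symmetric]) simp
    have N2: "integral {a..b} (\<lambda>t. u (vector [t, c]) $ 2 - u (vector [t, d]) $ 2)
            = - integral {a..b} (\<lambda>x. u (vector [x, d]) $ 2 - u (vector [x, c]) $ 2)"
      by (subst integral_neg[symmetric]) simp
    have S: "(b - a) + (d - c) > 0" using ab cd by simp
    have e4: "e * ((b - a) + (d - c)) = \<eta> / 4" using S unfolding e_def by (simp add: field_simps)
    have "2 * e * (d - c) + 2 * e * (b - a) = 2 * (e * ((b - a) + (d - c)))" by (simp add: algebra_simps)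
    then have ee: "2 * e * (d - c) + 2 * e * (b - a) = \<eta> / 2" using e4 by simp
    show ?thesis using HA HB N1 N2 XA XB sum0 ee ep(5) by linarith
  qed
  show ?thesis
  proof (rule ccontr)
    assume "?\<Phi> \<noteq> 0"
    then have "\<bar>?\<Phi>\<bar> > 0" by simp
    from bound[of "\<bar>?\<Phi>\<bar> / 2"] this show False by simp
  qed
qed


definition oint :: "real \<Rightarrow> real \<Rightarrow> (real \<Rightarrow> real) \<Rightarrow> real" where
  "oint a b f = (if a \<le> b then integral {a..b} f else - integral {b..a} f)"

lemma oint_same[simp]: "oint a a f = 0" by (simp add: oint_def)

lemma oint_swap: "oint b a f = - oint a b f"
  by (cases "a = b") (auto simp: oint_def)

lemma oint_neg: "oint a b (\<lambda>t. - f t) = - oint a b f"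
  by (simp add: oint_def integral_neg)

lemma oint_add:
  assumes "continuous_on UNIV f"
  shows "oint a b f + oint b c f = oint a c f"
proof -
  have i: "f integrable_on {s..t}" for s t
    using assms by (intro integrable_continuous_interval) (auto intro: continuous_on_subset)
  have comb: "integral {s..m} f + integral {m..t} f = integral {s..t} f" if "s \<le> m" "m \<le> t" for s m t
    using Henstock_Kurzweil_Integration.integral_combine[OF that i] .
  consider "a \<le> b" "b \<le> c" | "a \<le> c" "c \<le> b" | "b \<le> a" "a \<le> c" | "b \<le> c" "c \<le> a"
    | "c \<le> a" "a \<le> b" | "c \<le> b" "b \<le> a" by linarith
  then show ?thesis
  proof cases
    case 1 then show ?thesis using comb[of a b c] by (simp add: oint_def)
  next
    case 2 then show ?thesis using comb[of a c b] by (cases "b = c") (auto simp: oint_def)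
  next
    case 3 then show ?thesis using comb[of b a c] by (cases "a = b") (auto simp: oint_def)
  next
    case 4 then show ?thesis using comb[of b c a] by (cases "a = c"; cases "b = c") (auto simp: oint_def)
  next
    case 5 then show ?thesis using comb[of c a b] by (cases "a = c"; cases "a = b") (auto simp: oint_def)
  next
    case 6 then show ?thesis using comb[of c b a] by (cases "a = b"; cases "b = c") (auto simp: oint_def)
  qed
qed

lemma oint_diff:
  assumes "continuous_on UNIV f" "continuous_on UNIV g"
  shows "oint a b (\<lambda>t. f t - g t) = oint a b f - oint a b g"
proof -
  have i: "f integrable_on {s..t}" "g integrable_on {s..t}" for s t
    using assms by (auto intro: integrable_continuous_interval continuous_on_subset)
  show ?thesis by (simp add: oint_def integral_diff[OF i(1) i(2)])
qed

lemma oint_bound: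
  assumes "continuous_on UNIV f"
    and "\<And>t. min a b \<le> t \<Longrightarrow> t \<le> max a b \<Longrightarrow> \<bar>f t - f0\<bar> \<le> e"
  shows "\<bar>oint a b f - f0 * (b - a)\<bar> \<le> e * \<bar>b - a\<bar>"
proof -
  have gen: "\<bar>integral {s..t} f - f0 * (t - s)\<bar> \<le> e * (t - s)"
    if st: "s \<le> t" and h: "\<And>x. s \<le> x \<Longrightarrow> x \<le> t \<Longrightarrow> \<bar>f x - f0\<bar> \<le> e" for s t
  proof -
    have i: "f integrable_on {s..t}"
      using assms(1) by (auto intro: integrable_continuous_interval continuous_on_subset)
    have "integral {s..t} f - f0 * (t - s) = integral {s..t} (\<lambda>x. f x - f0)"
      using integral_diff[OF i integrable_const_ivl[of f0 s t]] st by (simp add: algebra_simps)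
    also have "\<bar>\<dots>\<bar> \<le> e * (t - s)"
    proof -
      have c: "continuous_on {s..t} (\<lambda>x. f x - f0)"
        by (intro continuous_intros continuous_on_subset[OF assms(1)]) auto
      show ?thesis using integral_bound[OF st c, of e] h by auto
    qed
    finally show ?thesis .
  qed
  show ?thesis
  proof (cases "a \<le> b")
    case True
    then show ?thesis using gen[of a b] assms(2) by (simp add: oint_def)
  next
    case False
    then have "\<bar>integral {b..a} f - f0 * (a - b)\<bar> \<le> e * (a - b)" using gen[of b a] assms(2) by simp
    moreover have "- integral {b..a} f - f0 * (b - a) = - (integral {b..a} f - f0 * (a - b))"
      by (simp add: algebra_simps)
    ultimately show ?thesis using False by (simp add: oint_def)
  qed
qed

lemma oint_lower:
  assumes "continuous_on UNIV f" "a \<le> b" "\<And>t. a \<le> t \<Longrightarrow> t \<le> b \<Longrightarrow> f t \<ge> c"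
  shows "oint a b f \<ge> c * (b - a)"
proof -
  have i: "f integrable_on {a..b}"
    using assms(1) by (auto intro: integrable_continuous_interval continuous_on_subset)
  have "integral {a..b} (\<lambda>_. c) \<le> integral {a..b} f"
    by (rule integral_le[OF integrable_const_ivl i]) (use assms(3) in auto)
  then show ?thesis using assms(2) by (simp add: oint_def mult.commute)
qed

lemma cont_slice2: "continuous_on UNIV (\<lambda>z. P (fst z) (snd z)) \<Longrightarrow> continuous_on S (\<lambda>s. P s t)"
  by (rule continuous_on_compose2[of UNIV "\<lambda>z. P (fst z) (snd z)" S "\<lambda>s. (s, t)", simplified])
    (auto intro!: continuous_intros)

definition fluxfree :: "(real \<Rightarrow> real \<Rightarrow> real) \<Rightarrow> (real \<Rightarrow> real \<Rightarrow> real) \<Rightarrow> bool" where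
  "fluxfree p q \<longleftrightarrow> (\<forall>a b c d. a < b \<longrightarrow> c < d \<longrightarrow>
      integral {c..d} (\<lambda>y. p b y - p a y) + integral {a..b} (\<lambda>x. q x d - q x c) = 0)"

lemma flux_oint:
  assumes PC: "continuous_on UNIV (\<lambda>z. p (fst z) (snd z))" and QC: "continuous_on UNIV (\<lambda>z. q (fst z) (snd z))"
    and FF: "fluxfree p q"
  shows "oint c d (\<lambda>y. p b y - p a y) + oint a b (\<lambda>x. q x d - q x c) = 0"
proof -
  define E where "E a b c d = oint c d (\<lambda>y. p b y - p a y) + oint a b (\<lambda>x. q x d - q x c)" for a b c d
  have E1: "E a b c d = - E b a c d" for a b c d
  proof -
    have "oint c d (\<lambda>y. p b y - p a y) = - oint c d (\<lambda>y. p a y - p b y)"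
      using oint_neg[of c d "\<lambda>y. p a y - p b y"] by simp
    then show ?thesis unfolding E_def using oint_swap[of a b] by simp
  qed
  have E2: "E a b c d = - E a b d c" for a b c d
  proof -
    have "oint a b (\<lambda>x. q x d - q x c) = - oint a b (\<lambda>x. q x c - q x d)"
      using oint_neg[of a b "\<lambda>x. q x c - q x d"] by simp
    then show ?thesis unfolding E_def using oint_swap[of c d] by simp
  qed
  have E0: "E a b c d = 0" if "a < b" "c < d" for a b c d
    using FF that unfolding fluxfree_def E_def oint_def by auto
  have Ea: "E a a c d = 0" for a c d unfolding E_def by (simp add: oint_def)
  have Ec: "E a b c c = 0" for a b c unfolding E_def by (simp add: oint_def)
  have pos: "E a b c d = 0" if ab: "a < b" for a b c d
  proof -
    consider "c < d" | "c = d" | "d < c" by linarith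
    then show ?thesis
    proof cases
      case 1 then show ?thesis using E0[OF ab] by blast
    next
      case 2 then show ?thesis using Ec by blast
    next
      case 3
      have "E a b d c = 0" using E0[OF ab 3] .
      then show ?thesis using E2[of a b c d] by linarith
    qed
  qed
  have "E a b c d = 0"
  proof -
    consider "a < b" | "a = b" | "b < a" by linarith
    then show ?thesis
    proof cases
      case 1 then show ?thesis using pos by blast
    next
      case 2 then show ?thesis using Ea by blast
    next
      case 3
      have "E b a c d = 0" using pos[OF 3] .
      then show ?thesis using E1[of a b c d] by linarith
    qed
  qed
  then show ?thesis by (simp add: E_def)
qed


definition psi :: "(real \<Rightarrow> real \<Rightarrow> real) \<Rightarrow> (real \<Rightarrow> real \<Rightarrow> real) \<Rightarrow> real \<Rightarrow> real \<Rightarrow> real \<Rightarrow> real \<Rightarrow> real" where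
  "psi p q x0 y0 x y = oint y0 y (p x) - oint x0 x (\<lambda>s. q s y0)"

lemma psi_diff:
  assumes PC: "continuous_on UNIV (\<lambda>z. p (fst z) (snd z))" and QC: "continuous_on UNIV (\<lambda>z. q (fst z) (snd z))"
    and FF: "fluxfree p q"
  shows "psi p q x0 y0 x' y' - psi p q x0 y0 x y = oint y y' (p x') - oint x x' (\<lambda>s. q s y)"
proof -
  have cp: "continuous_on UNIV (p s)" for s by (rule cont_slice1[OF PC])
  have cq: "continuous_on UNIV (\<lambda>s. q s t)" for t by (rule cont_slice2[OF QC])
  have a1: "oint y0 y (p x') + oint y y' (p x') = oint y0 y' (p x')" by (rule oint_add[OF cp])
  have a2: "oint x0 x (\<lambda>s. q s y0) + oint x x' (\<lambda>s. q s y0) = oint x0 x' (\<lambda>s. q s y0)" by (rule oint_add[OF cq])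
  have fl: "oint y0 y (\<lambda>t. p x' t - p x t) + oint x x' (\<lambda>s. q s y - q s y0) = 0"
    by (rule flux_oint[OF PC QC FF])
  have d1: "oint y0 y (\<lambda>t. p x' t - p x t) = oint y0 y (p x') - oint y0 y (p x)" by (rule oint_diff[OF cp cp])
  have d2: "oint x x' (\<lambda>s. q s y - q s y0) = oint x x' (\<lambda>s. q s y) - oint x x' (\<lambda>s. q s y0)"
    by (rule oint_diff[OF cq cq])
  show ?thesis unfolding psi_def using a1 a2 fl d1 d2 by linarith
qed

lemma psi_deriv:
  assumes PC: "continuous_on UNIV (\<lambda>z. p (fst z) (snd z))" and QC: "continuous_on UNIV (\<lambda>z. q (fst z) (snd z))"
    and FF: "fluxfree p q"
  shows "((\<lambda>z. psi p q x0 y0 (fst z) (snd z)) has_derivative (\<lambda>v. p x y * snd v - q x y * fst v)) (at (x, y))"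
  unfolding has_derivative_at_alt
proof (intro conjI allI impI)
  show "bounded_linear (\<lambda>v::real\<times>real. p x y * snd v - q x y * fst v)"
    by (intro bounded_linear_intros)
  fix e :: real assume e: "e > 0"
  have cp: "continuous_on UNIV (p s)" for s by (rule cont_slice1[OF PC])
  have cq: "continuous_on UNIV (\<lambda>s. q s t)" for t by (rule cont_slice2[OF QC])
  have "isCont (\<lambda>z. p (fst z) (snd z)) (x, y)" using PC by (simp add: continuous_on_eq_continuous_at)
  then obtain d1 where d1: "d1 > 0" "\<And>z. dist z (x, y) < d1 \<Longrightarrow> dist (p (fst z) (snd z)) (p x y) < e / 2"
    unfolding continuous_at_eps_delta using e by (metis fst_conv half_gt_zero snd_conv)
  have "isCont (\<lambda>z. q (fst z) (snd z)) (x, y)" using QC by (simp add: continuous_on_eq_continuous_at)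
  then obtain d2 where d2: "d2 > 0" "\<And>z. dist z (x, y) < d2 \<Longrightarrow> dist (q (fst z) (snd z)) (q x y) < e / 2"
    unfolding continuous_at_eps_delta using e by (metis fst_conv half_gt_zero snd_conv)
  define d where "d = min d1 d2 / 2"
  have d: "d > 0" using d1 d2 by (simp add: d_def)
  show "\<exists>d>0. \<forall>v. norm (v - (x, y)) < d \<longrightarrow>
      norm (psi p q x0 y0 (fst v) (snd v) - psi p q x0 y0 (fst (x, y)) (snd (x, y)) - (p x y * snd (v - (x, y)) - q x y * fst (v - (x, y))))
      \<le> e * norm (v - (x, y))"
  proof (intro exI[of _ d] conjI allI impI d)
    fix v :: "real \<times> real"
    assume v: "norm (v - (x, y)) < d"
    obtain x' y' where v': "v = (x', y')" by fastforce
    have hx: "\<bar>x' - x\<bar> \<le> norm (v - (x, y))" and hy: "\<bar>y' - y\<bar> \<le> norm (v - (x, y))"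
      using norm_fst_le[where x="x' - x" and y="y' - y"] norm_snd_le[where x="x' - x" and y="y' - y"] v' by auto
    have dist2: "dist (a, b) (x, y) \<le> \<bar>a - x\<bar> + \<bar>b - y\<bar>" for a b
      using sqrt_sum_squares_le_sum_abs[of "a - x" "b - y"] by (simp add: dist_Pair_Pair dist_real_def)
    have b1: "\<bar>oint y y' (p x') - p x y * (y' - y)\<bar> \<le> e / 2 * \<bar>y' - y\<bar>"
    proof (rule oint_bound[OF cp])
      fix t assume t: "min y y' \<le> t" "t \<le> max y y'"
      have "dist (x', t) (x, y) \<le> \<bar>x' - x\<bar> + \<bar>t - y\<bar>" by (rule dist2)
      also have "\<dots> \<le> 2 * norm (v - (x, y))" using hx hy t by (auto simp: abs_le_iff)
      also have "\<dots> < d1" using v by (simp add: d_def)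
      finally show "\<bar>p x' t - p x y\<bar> \<le> e / 2" using d1(2)[of "(x', t)"] by (simp add: dist_real_def)
    qed
    have b2: "\<bar>oint x x' (\<lambda>s. q s y) - q x y * (x' - x)\<bar> \<le> e / 2 * \<bar>x' - x\<bar>"
    proof (rule oint_bound[OF cq])
      fix s assume s: "min x x' \<le> s" "s \<le> max x x'"
      have "dist (s, y) (x, y) \<le> \<bar>s - x\<bar> + \<bar>y - y\<bar>" by (rule dist2)
      also have "\<dots> \<le> 2 * norm (v - (x, y))" using hx s by (auto simp: abs_le_iff)
      also have "\<dots> < d2" using v by (simp add: d_def)
      finally show "\<bar>q s y - q x y\<bar> \<le> e / 2" using d2(2)[of "(s, y)"] by (simp add: dist_real_def)
    qed
    have eq: "psi p q x0 y0 x' y' - psi p q x0 y0 x y = oint y y' (p x') - oint x x' (\<lambda>s. q s y)"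
      by (rule psi_diff[OF PC QC FF])
    have "\<bar>psi p q x0 y0 x' y' - psi p q x0 y0 x y - (p x y * (y' - y) - q x y * (x' - x))\<bar>
          \<le> e / 2 * \<bar>y' - y\<bar> + e / 2 * \<bar>x' - x\<bar>"
      using b1 b2 eq by linarith
    also have "\<dots> \<le> e / 2 * norm (v - (x, y)) + e / 2 * norm (v - (x, y))"
      using hx hy e by (intro add_mono mult_left_mono) auto
    finally show "norm (psi p q x0 y0 (fst v) (snd v) - psi p q x0 y0 (fst (x, y)) (snd (x, y)) - (p x y * snd (v - (x, y)) - q x y * fst (v - (x, y))))
      \<le> e * norm (v - (x, y))" using v' by simp
  qed
qed

lemma psi_const:
  assumes PC: "continuous_on UNIV (\<lambda>z. p (fst z) (snd z))" and QC: "continuous_on UNIV (\<lambda>z. q (fst z) (snd z))"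
    and FF: "fluxfree p q" and T: "convex T" "t0 \<in> T"
    and dx: "\<And>t. t \<in> T \<Longrightarrow> (xc has_real_derivative p (xc t) (yc t)) (at t within T)"
    and dy: "\<And>t. t \<in> T \<Longrightarrow> (yc has_real_derivative q (xc t) (yc t)) (at t within T)"
  shows "\<forall>t\<in>T. psi p q x0 y0 (xc t) (yc t) = psi p q x0 y0 (xc t0) (yc t0)"
proof -
  have "((\<lambda>t. psi p q x0 y0 (xc t) (yc t)) has_derivative (\<lambda>h. 0)) (at t within T)" if t: "t \<in> T" for t
  proof -
    have c: "((\<lambda>t. (xc t, yc t)) has_derivative (\<lambda>h. (p (xc t) (yc t) * h, q (xc t) (yc t) * h))) (at t within T)"
      using has_derivative_Pair[OF dx[OF t, unfolded has_field_derivative_def] dy[OF t, unfolded has_field_derivative_def]]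
      by simp
    from has_derivative_compose[OF c psi_deriv[OF PC QC FF, of x0 y0 "xc t" "yc t"]]
    show ?thesis by (simp add: algebra_simps)
  qed
  from has_derivative_zero_constant[OF T(1) this] show ?thesis using T(2) by metis
qed


lemma box_bound:
  fixes p :: "real \<Rightarrow> real \<Rightarrow> real"
  assumes "continuous_on UNIV (\<lambda>z. p (fst z) (snd z))"
  shows "\<exists>B>0. \<forall>x y. \<bar>x - x0\<bar> \<le> r \<longrightarrow> \<bar>y - y0\<bar> \<le> r \<longrightarrow> \<bar>p x y\<bar> \<le> B"
proof -
  have "compact ((\<lambda>z. p (fst z) (snd z)) ` cbox (x0 - r, y0 - r) (x0 + r, y0 + r))"
    by (rule compact_continuous_image[OF continuous_on_subset[OF assms]]) auto
  then obtain B where B: "B > 0" "\<forall>w\<in>(\<lambda>z. p (fst z) (snd z)) ` cbox (x0 - r, y0 - r) (x0 + r, y0 + r). norm w \<le> B"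
    using compact_imp_bounded bounded_pos by metis
  have "\<bar>p x y\<bar> \<le> B" if "\<bar>x - x0\<bar> \<le> r" "\<bar>y - y0\<bar> \<le> r" for x y
  proof -
    have "(x, y) \<in> cbox (x0 - r, y0 - r) (x0 + r, y0 + r)"
      using that by (auto simp: cbox_Pair_eq abs_le_iff)
    then show ?thesis using B(2) by force
  qed
  then show ?thesis using B(1) by blast
qed

lemma oint_cmult: "oint a b (\<lambda>t. c * f t) = c * oint a b f"
  by (simp add: oint_def)

lemma core_local:
  fixes p q :: "real \<Rightarrow> real \<Rightarrow> real" and x1 y1 x2 y2 :: "real \<Rightarrow> real"
  assumes PC: "continuous_on UNIV (\<lambda>z. p (fst z) (snd z))" and QC: "continuous_on UNIV (\<lambda>z. q (fst z) (snd z))"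
    and FF: "fluxfree p q" and nz: "p x0 y0 \<noteq> 0"
    and J: "is_interval J" "t0 \<in> J"
    and dx1: "\<And>t. t \<in> J \<Longrightarrow> (x1 has_real_derivative p (x1 t) (y1 t)) (at t within J)"
    and dy1: "\<And>t. t \<in> J \<Longrightarrow> (y1 has_real_derivative q (x1 t) (y1 t)) (at t within J)"
    and dx2: "\<And>t. t \<in> J \<Longrightarrow> (x2 has_real_derivative p (x2 t) (y2 t)) (at t within J)"
    and dy2: "\<And>t. t \<in> J \<Longrightarrow> (y2 has_real_derivative q (x2 t) (y2 t)) (at t within J)"
    and i1: "x1 t0 = x0" "y1 t0 = y0" and i2: "x2 t0 = x0" "y2 t0 = y0"
  shows "\<exists>\<delta>>0. \<forall>t\<in>J. \<bar>t - t0\<bar> < \<delta> \<longrightarrow> x1 t = x2 t \<and> y1 t = y2 t"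
proof -
  define \<psi> where "\<psi> = psi p q x0 y0"
  have psi00: "\<psi> x0 y0 = 0" by (simp add: \<psi>_def psi_def)
  have psid: "\<psi> x' y' - \<psi> x y = oint y y' (p x') - oint x x' (\<lambda>s. q s y)" for x y x' y'
    unfolding \<psi>_def by (rule psi_diff[OF PC QC FF])
  have cp: "continuous_on UNIV (p s)" for s by (rule cont_slice1[OF PC])
  have cq: "continuous_on UNIV (\<lambda>s. q s t)" for t by (rule cont_slice2[OF QC])
  define \<sigma> :: real where "\<sigma> = sgn (p x0 y0)"
  have \<sigma>: "\<sigma> = 1 \<or> \<sigma> = -1" "\<sigma> * p x0 y0 = \<bar>p x0 y0\<bar>" "\<sigma> * \<sigma> = 1"
    using nz by (auto simp: \<sigma>_def sgn_if)
  define c0 where "c0 = \<bar>p x0 y0\<bar> / 2"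
  have c0: "c0 > 0" using nz by (simp add: c0_def)
  have "isCont (\<lambda>z. p (fst z) (snd z)) (x0, y0)" using PC by (simp add: continuous_on_eq_continuous_at)
  then obtain r0 where r0: "r0 > 0" "\<And>z. dist z (x0, y0) < r0 \<Longrightarrow> dist (p (fst z) (snd z)) (p x0 y0) < c0"
    unfolding continuous_at_eps_delta using c0 by (metis fst_conv snd_conv)
  define r where "r = r0 / 3"
  have r: "r > 0" using r0 by (simp add: r_def)
  have dist2: "dist (a, b) (x0, y0) \<le> \<bar>a - x0\<bar> + \<bar>b - y0\<bar>" for a b
    using sqrt_sum_squares_le_sum_abs[of "a - x0" "b - y0"] by (simp add: dist_Pair_Pair dist_real_def)
  have plow: "\<sigma> * p x y \<ge> c0" if "\<bar>x - x0\<bar> \<le> r" "\<bar>y - y0\<bar> \<le> r" for x y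
  proof -
    have "dist (x, y) (x0, y0) < r0" using dist2[of x y] that r0 by (simp add: r_def)
    then have "\<bar>p x y - p x0 y0\<bar> < c0" using r0(2)[of "(x, y)"] by (simp add: dist_real_def)
    moreover have "\<sigma> * p x y = \<bar>p x0 y0\<bar> + \<sigma> * (p x y - p x0 y0)" using \<sigma>(2) by (simp add: algebra_simps)
    moreover have "\<bar>\<sigma> * (p x y - p x0 y0)\<bar> = \<bar>p x y - p x0 y0\<bar>" using \<sigma>(1) by auto
    ultimately show ?thesis unfolding c0_def by linarith
  qed
  obtain Bp where Bp: "Bp > 0" "\<And>x y. \<bar>x - x0\<bar> \<le> r \<Longrightarrow> \<bar>y - y0\<bar> \<le> r \<Longrightarrow> \<bar>p x y\<bar> \<le> Bp"
    using box_bound[OF PC, of x0 r y0] by blast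
  obtain Bq where Bq: "Bq > 0" "\<And>x y. \<bar>x - x0\<bar> \<le> r \<Longrightarrow> \<bar>y - y0\<bar> \<le> r \<Longrightarrow> \<bar>q x y\<bar> \<le> Bq"
    using box_bound[OF QC, of x0 r y0] by blast
  have mono: "\<sigma> * (\<psi> x y' - \<psi> x y) \<ge> c0 * (y' - y)"
    if "\<bar>x - x0\<bar> \<le> r" "\<bar>y - y0\<bar> \<le> r" "\<bar>y' - y0\<bar> \<le> r" "y \<le> y'" for x y y'
  proof -
    have "\<sigma> * (\<psi> x y' - \<psi> x y) = oint y y' (\<lambda>t. \<sigma> * p x t)"
      using psid[of x y' x y] by (simp add: oint_cmult)
    also have "\<dots> \<ge> c0 * (y' - y)"
    proof (rule oint_lower)
      show "continuous_on UNIV (\<lambda>t. \<sigma> * p x t)" by (intro continuous_intros cp)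
      show "y \<le> y'" by fact
      fix t assume "y \<le> t" "t \<le> y'"
      then show "\<sigma> * p x t \<ge> c0" using that by (intro plow) auto
    qed
    finally show ?thesis .
  qed
  have inj: "c0 * \<bar>y' - y\<bar> \<le> \<bar>\<psi> x y' - \<psi> x y\<bar>"
    if "\<bar>x - x0\<bar> \<le> r" "\<bar>y - y0\<bar> \<le> r" "\<bar>y' - y0\<bar> \<le> r" for x y y'
  proof (cases "y \<le> y'")
    case True
    have "c0 * \<bar>y' - y\<bar> \<le> \<sigma> * (\<psi> x y' - \<psi> x y)" using mono[OF that True] True by simp
    also have "\<dots> \<le> \<bar>\<psi> x y' - \<psi> x y\<bar>" using \<sigma>(1) by auto
    finally show ?thesis .
  next
    case False
    have "c0 * \<bar>y' - y\<bar> \<le> \<sigma> * (\<psi> x y - \<psi> x y')" using mono[OF that(1,3,2)] False by simp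
    also have "\<dots> \<le> \<bar>\<psi> x y' - \<psi> x y\<bar>" using \<sigma>(1) by auto
    finally show ?thesis .
  qed
  have lipx: "\<bar>\<psi> x' y - \<psi> x y\<bar> \<le> Bq * \<bar>x' - x\<bar>"
    if "\<bar>x - x0\<bar> \<le> r" "\<bar>x' - x0\<bar> \<le> r" "\<bar>y - y0\<bar> \<le> r" for x x' y
  proof -
    have "\<psi> x' y - \<psi> x y = - oint x x' (\<lambda>s. q s y)" using psid[of x' y x y] by simp
    moreover have "\<bar>oint x x' (\<lambda>s. q s y) - 0 * (x' - x)\<bar> \<le> Bq * \<bar>x' - x\<bar>"
    proof (rule oint_bound[OF cq])
      fix s assume "min x x' \<le> s" "s \<le> max x x'"
      then have "\<bar>s - x0\<bar> \<le> r" using that by (auto simp: abs_le_iff)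
      then show "\<bar>q s y - 0\<bar> \<le> Bq" using Bq(2) that by simp
    qed
    ultimately show ?thesis by simp
  qed
  have psic: "continuous_on UNIV (\<lambda>z. \<psi> (fst z) (snd z))"
  proof -
    have "isCont (\<lambda>z. \<psi> (fst z) (snd z)) z" for z
      using psi_deriv[OF PC QC FF, of x0 y0 "fst z" "snd z"] has_derivative_continuous
      by (metis \<psi>_def prod.collapse)
    then show ?thesis by (simp add: continuous_at_imp_continuous_on)
  qed
  have psiy: "continuous_on S (\<psi> s)" for S s by (rule cont_slice1[OF psic])
  define \<rho> where "\<rho> = min r (c0 * r / (2 * Bq))"
  have \<rho>: "\<rho> > 0" "\<rho> \<le> r" "Bq * \<rho> \<le> c0 * r / 2"
  proof -
    show "\<rho> > 0" using r c0 Bq by (simp add: \<rho>_def)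
    show "\<rho> \<le> r" by (simp add: \<rho>_def)
    have "\<rho> \<le> c0 * r / (2 * Bq)" by (simp add: \<rho>_def)
    then have "Bq * \<rho> \<le> Bq * (c0 * r / (2 * Bq))" using Bq by (intro mult_left_mono) auto
    also have "\<dots> = c0 * r / 2" using Bq by (simp add: field_simps)
    finally show "Bq * \<rho> \<le> c0 * r / 2" .
  qed
  have top0: "\<sigma> * \<psi> x0 (y0 + r) \<ge> c0 * r" using mono[of x0 y0 "y0 + r"] r psi00 by simp
  have bot0: "\<sigma> * \<psi> x0 (y0 - r) \<le> - (c0 * r)" using mono[of x0 "y0 - r" y0] r psi00 by simp
  have ends: "\<sigma> * \<psi> s (y0 + r) > 0 \<and> \<sigma> * \<psi> s (y0 - r) < 0" if s: "\<bar>s - x0\<bar> \<le> \<rho>" for s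
  proof -
    have s': "\<bar>s - x0\<bar> \<le> r" using s \<rho> by linarith
    have l1: "\<bar>\<psi> s (y0 + r) - \<psi> x0 (y0 + r)\<bar> \<le> Bq * \<bar>s - x0\<bar>" using lipx[of x0 s "y0 + r"] s' r by simp
    have l2: "\<bar>\<psi> s (y0 - r) - \<psi> x0 (y0 - r)\<bar> \<le> Bq * \<bar>s - x0\<bar>" using lipx[of x0 s "y0 - r"] s' r by simp
    have "Bq * \<bar>s - x0\<bar> \<le> Bq * \<rho>" using s Bq by (intro mult_left_mono) auto
    then have B: "Bq * \<bar>s - x0\<bar> \<le> c0 * r / 2" using \<rho>(3) by linarith
    have cr: "c0 * r > 0" using c0 r by simp
    have a1: "\<bar>\<sigma> * \<psi> s (y0 + r) - \<sigma> * \<psi> x0 (y0 + r)\<bar> = \<bar>\<psi> s (y0 + r) - \<psi> x0 (y0 + r)\<bar>"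
      using \<sigma>(1) by (auto simp: algebra_simps)
    have a2: "\<bar>\<sigma> * \<psi> s (y0 - r) - \<sigma> * \<psi> x0 (y0 - r)\<bar> = \<bar>\<psi> s (y0 - r) - \<psi> x0 (y0 - r)\<bar>"
      using \<sigma>(1) by (auto simp: algebra_simps)
    show ?thesis using a1 a2 l1 l2 B top0 bot0 cr by (auto simp: abs_le_iff)
  qed
  have ex: "\<exists>y. \<bar>y - y0\<bar> \<le> r \<and> \<psi> s y = 0" if s: "\<bar>s - x0\<bar> \<le> \<rho>" for s
  proof -
    have c: "continuous_on {y0 - r..y0 + r} (\<lambda>y. \<sigma> * \<psi> s y)" by (intro continuous_intros psiy)
    obtain y where y: "y0 - r \<le> y" "y \<le> y0 + r" "\<sigma> * \<psi> s y = 0"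
      using IVT'[of "\<lambda>y. \<sigma> * \<psi> s y" "y0 - r" 0 "y0 + r", OF _ _ _ c] ends[OF s] r by auto
    then have "\<psi> s y = 0" using \<sigma>(1) by auto
    then show ?thesis using y by (intro exI[of _ y]) auto
  qed
  have uniq: "y = y'" if "\<bar>s - x0\<bar> \<le> r" "\<bar>y - y0\<bar> \<le> r" "\<bar>y' - y0\<bar> \<le> r" "\<psi> s y = \<psi> s y'" for s y y'
  proof -
    have "c0 * \<bar>y' - y\<bar> \<le> 0" using inj[OF that(1-3)] that(4) by simp
    then have "\<bar>y' - y\<bar> \<le> 0" using c0 by (simp add: mult_le_0_iff)
    then show ?thesis by simp
  qed
  define \<gamma> where "\<gamma> s = (THE y. \<bar>y - y0\<bar> \<le> r \<and> \<psi> s y = 0)" for s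
  have \<gamma>: "\<bar>\<gamma> s - y0\<bar> \<le> r \<and> \<psi> s (\<gamma> s) = 0" if s: "\<bar>s - x0\<bar> \<le> \<rho>" for s
  proof -
    have s': "\<bar>s - x0\<bar> \<le> r" using s \<rho> by linarith
    obtain y where y: "\<bar>y - y0\<bar> \<le> r \<and> \<psi> s y = 0" using ex[OF s] by blast
    have "\<exists>!y. \<bar>y - y0\<bar> \<le> r \<and> \<psi> s y = 0"
    proof (rule ex1I[of _ y])
      show "\<bar>y - y0\<bar> \<le> r \<and> \<psi> s y = 0" by (rule y)
      fix y' assume "\<bar>y' - y0\<bar> \<le> r \<and> \<psi> s y' = 0"
      then show "y' = y" using uniq[OF s', of y' y] y by simp
    qed
    then show ?thesis unfolding \<gamma>_def by (rule theI')
  qed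
  have \<gamma>u: "y = \<gamma> s" if s: "\<bar>s - x0\<bar> \<le> \<rho>" and "\<bar>y - y0\<bar> \<le> r" "\<psi> s y = 0" for s y
  proof -
    have s': "\<bar>s - x0\<bar> \<le> r" using s \<rho> by linarith
    show ?thesis using uniq[OF s' that(2), of "\<gamma> s"] \<gamma>[OF s] that(3) by simp
  qed
  define I0 where "I0 = {x0 - \<rho>..x0 + \<rho>}"
  have inI0: "s \<in> I0 \<longleftrightarrow> \<bar>s - x0\<bar> \<le> \<rho>" for s by (auto simp: I0_def abs_le_iff)
  have \<gamma>c: "continuous_on I0 \<gamma>"
  proof (rule lipschitz_on_continuous_on[of "Bq / c0"], rule lipschitz_onI)
    show "0 \<le> Bq / c0" using Bq c0 by simp
    fix s s' assume ss: "s \<in> I0" "s' \<in> I0"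
    then have s: "\<bar>s - x0\<bar> \<le> \<rho>" "\<bar>s' - x0\<bar> \<le> \<rho>" using inI0 by auto
    then have s': "\<bar>s - x0\<bar> \<le> r" "\<bar>s' - x0\<bar> \<le> r" using \<rho> by linarith+
    have "c0 * \<bar>\<gamma> s - \<gamma> s'\<bar> \<le> \<bar>\<psi> s (\<gamma> s) - \<psi> s (\<gamma> s')\<bar>"
      using inj[of s "\<gamma> s'" "\<gamma> s"] \<gamma>[OF s(1)] \<gamma>[OF s(2)] s' by simp
    also have "\<dots> = \<bar>\<psi> s (\<gamma> s') - \<psi> s' (\<gamma> s')\<bar>" using \<gamma>[OF s(1)] \<gamma>[OF s(2)] by simp
    also have "\<dots> \<le> Bq * \<bar>s - s'\<bar>" using lipx[of s' s "\<gamma> s'"] s' \<gamma>[OF s(2)] by simp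
    finally have "c0 * \<bar>\<gamma> s - \<gamma> s'\<bar> \<le> Bq * \<bar>s - s'\<bar>" .
    then show "dist (\<gamma> s) (\<gamma> s') \<le> Bq / c0 * dist s s'"
      using c0 by (simp add: dist_real_def field_simps)
  qed
  define g where "g s = p s (\<gamma> s)" for s
  have gc: "continuous_on I0 g"
  proof -
    have "continuous_on I0 (\<lambda>s. (s, \<gamma> s))" by (intro continuous_intros \<gamma>c)
    from continuous_on_compose2[OF PC this] show ?thesis by (simp add: g_def)
  qed
  have glow: "\<sigma> * g s \<ge> c0" "\<bar>g s\<bar> \<le> Bp" if "s \<in> I0" for s
  proof -
    have s: "\<bar>s - x0\<bar> \<le> \<rho>" using that inI0 by auto
    then have "\<bar>s - x0\<bar> \<le> r" using \<rho> by linarith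
    then show "\<sigma> * g s \<ge> c0" "\<bar>g s\<bar> \<le> Bp" using plow Bp(2) \<gamma>[OF s] by (auto simp: g_def)
  qed
  have gnz: "g s \<noteq> 0" if "s \<in> I0" for s using glow(1)[OF that] c0 by auto
  have igc: "continuous_on I0 (\<lambda>s. 1 / g s)" by (intro continuous_intros gc) (use gnz in auto)
  define \<Phi> where "\<Phi> s = integral {x0 - \<rho>..s} (\<lambda>s. 1 / g s)" for s
  have \<Phi>d: "(\<Phi> has_real_derivative 1 / g s) (at s within I0)" if "s \<in> I0" for s
    unfolding \<Phi>_def using integral_has_real_derivative[OF igc[unfolded I0_def] that[unfolded I0_def]]
    by (simp add: I0_def)
  have \<Phi>inj: "s = s'" if "s \<in> I0" "s' \<in> I0" "\<Phi> s = \<Phi> s'" for s s'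
  proof (rule ccontr)
    assume ne: "s \<noteq> s'"
    have strict: "\<sigma> * (\<Phi> b - \<Phi> a) > 0" if ab: "a \<in> I0" "b \<in> I0" "a < b" for a b
    proof -
      have sub: "{a..b} \<subseteq> I0" using ab by (auto simp: I0_def)
      have int: "(\<lambda>s. 1 / g s) integrable_on {x0 - \<rho>..b}"
        using igc ab by (intro integrable_continuous_interval) (auto simp: I0_def intro: continuous_on_subset)
      have "\<Phi> a + integral {a..b} (\<lambda>s. 1 / g s) = \<Phi> b"
        unfolding \<Phi>_def using ab
        by (intro Henstock_Kurzweil_Integration.integral_combine int) (auto simp: I0_def)
      moreover have "integral {a..b} (\<lambda>s. \<sigma> * (1 / g s)) \<ge> integral {a..b} (\<lambda>_. 1 / Bp)"
      proof (rule integral_le)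
        show "(\<lambda>_. 1 / Bp) integrable_on {a..b}" by (rule integrable_const_ivl)
        show "(\<lambda>s. \<sigma> * (1 / g s)) integrable_on {a..b}"
          by (intro integrable_continuous_interval continuous_intros continuous_on_subset[OF igc sub])
        fix s assume "s \<in> {a..b}"
        then have sI: "s \<in> I0" using sub by auto
        have "\<sigma> * (1 / g s) = 1 / (\<sigma> * g s)" using \<sigma>(1) by auto
        moreover have "\<sigma> * g s \<le> Bp" using glow(2)[OF sI] \<sigma>(1) by auto
        ultimately show "1 / Bp \<le> \<sigma> * (1 / g s)"
          using glow(1)[OF sI] c0 by (simp add: frac_le)
      qed
      moreover have "integral {a..b} (\<lambda>_. 1 / Bp) > 0" using ab Bp by simp
      moreover have "integral {a..b} (\<lambda>s. \<sigma> * (1 / g s)) = \<sigma> * integral {a..b} (\<lambda>s. 1 / g s)"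
        by (rule Henstock_Kurzweil_Integration.integral_mult_right)
      ultimately have A: "\<Phi> a + integral {a..b} (\<lambda>s. 1 / g s) = \<Phi> b"
        and B: "\<sigma> * integral {a..b} (\<lambda>s. 1 / g s) > 0" by linarith+
      have "\<Phi> b - \<Phi> a = integral {a..b} (\<lambda>s. 1 / g s)" using A by linarith
      then have "\<sigma> * (\<Phi> b - \<Phi> a) = \<sigma> * integral {a..b} (\<lambda>s. 1 / g s)" by simp
      then show ?thesis using B by linarith
    qed
    show False
    proof (cases "s < s'")
      case True then show ?thesis using strict[of s s'] that by simp
    next
      case False then have "s' < s" using ne by simp
      then show ?thesis using strict[of s' s] that by simp
    qed
  qed
  have cont_at: "continuous (at t0 within J) f" if "(f has_real_derivative f') (at t0 within J)" for f f'
    using that by (rule DERIV_continuous)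
  have near: "\<exists>\<delta>>0. \<forall>t\<in>J. dist t t0 < \<delta> \<longrightarrow> dist (f t) (f t0) < e"
    if "(f has_real_derivative f') (at t0 within J)" "e > 0" for f f' e
    using cont_at[OF that(1)] that(2) unfolding continuous_within_eps_delta by blast
  obtain d1 where d1: "d1 > 0" "\<And>t. t \<in> J \<Longrightarrow> dist t t0 < d1 \<Longrightarrow> dist (x1 t) (x1 t0) < \<rho>"
    using near[OF dx1[OF J(2)] \<rho>(1)] by blast
  obtain d2 where d2: "d2 > 0" "\<And>t. t \<in> J \<Longrightarrow> dist t t0 < d2 \<Longrightarrow> dist (y1 t) (y1 t0) < r"
    using near[OF dy1[OF J(2)] r] by blast
  obtain d3 where d3: "d3 > 0" "\<And>t. t \<in> J \<Longrightarrow> dist t t0 < d3 \<Longrightarrow> dist (x2 t) (x2 t0) < \<rho>"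
    using near[OF dx2[OF J(2)] \<rho>(1)] by blast
  obtain d4 where d4: "d4 > 0" "\<And>t. t \<in> J \<Longrightarrow> dist t t0 < d4 \<Longrightarrow> dist (y2 t) (y2 t0) < r"
    using near[OF dy2[OF J(2)] r] by blast
  define \<delta> where "\<delta> = min (min d1 d2) (min d3 d4)"
  have \<delta>: "\<delta> > 0" using d1 d2 d3 d4 by (simp add: \<delta>_def)
  define T where "T = J \<inter> {t0 - \<delta><..<t0 + \<delta>}"
  have Tc: "convex T" unfolding T_def using is_interval_convex[OF J(1)] by (intro convex_Int) auto
  have t0T: "t0 \<in> T" using J \<delta> by (simp add: T_def)
  have TJ: "T \<subseteq> J" by (auto simp: T_def)
  have inT: "\<bar>x1 t - x0\<bar> < \<rho> \<and> \<bar>y1 t - y0\<bar> < r \<and> \<bar>x2 t - x0\<bar> < \<rho> \<and> \<bar>y2 t - y0\<bar> < r" if "t \<in> T" for t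
  proof -
    have tJ: "t \<in> J" and dt: "dist t t0 < \<delta>" using that by (auto simp: T_def dist_real_def abs_less_iff)
    show ?thesis using d1(2)[OF tJ] d2(2)[OF tJ] d3(2)[OF tJ] d4(2)[OF tJ] dt i1 i2
      by (simp add: \<delta>_def dist_real_def)
  qed
  have cons: "\<psi> (xc t) (yc t) = 0" if t: "t \<in> T"
    and dxc: "\<And>t. t \<in> J \<Longrightarrow> (xc has_real_derivative p (xc t) (yc t)) (at t within J)"
    and dyc: "\<And>t. t \<in> J \<Longrightarrow> (yc has_real_derivative q (xc t) (yc t)) (at t within J)"
    and ic: "xc t0 = x0" "yc t0 = y0" for xc yc t
  proof -
    have "\<forall>t\<in>T. psi p q x0 y0 (xc t) (yc t) = psi p q x0 y0 (xc t0) (yc t0)"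
    proof (rule psi_const[OF PC QC FF Tc t0T])
      fix t assume "t \<in> T"
      then show "(xc has_real_derivative p (xc t) (yc t)) (at t within T)"
        "(yc has_real_derivative q (xc t) (yc t)) (at t within T)"
        using dxc dyc TJ by (auto intro: DERIV_subset)
    qed
    then show ?thesis using t ic psi00 by (simp add: \<psi>_def)
  qed
  have phit: "\<Phi> (xc t) - t = \<Phi> x0 - t0"
    if t: "t \<in> T"
    and dxc: "\<And>t. t \<in> J \<Longrightarrow> (xc has_real_derivative p (xc t) (yc t)) (at t within J)"
    and dyc: "\<And>t. t \<in> J \<Longrightarrow> (yc has_real_derivative q (xc t) (yc t)) (at t within J)"
    and ic: "xc t0 = x0" "yc t0 = y0"
    and bnd: "\<And>t. t \<in> T \<Longrightarrow> \<bar>xc t - x0\<bar> < \<rho> \<and> \<bar>yc t - y0\<bar> < r" for xc yc t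
  proof -
    have "\<exists>c. \<forall>t\<in>T. \<Phi> (xc t) - t = c"
    proof (rule has_field_derivative_zero_constant[OF Tc])
      fix t assume tT: "t \<in> T"
      have xI: "xc t \<in> I0" using bnd[OF tT] inI0 by auto
      have yeq: "yc t = \<gamma> (xc t)"
        using \<gamma>u[of "xc t" "yc t"] bnd[OF tT] cons[OF tT dxc dyc ic] by auto
      have d1: "(xc has_real_derivative p (xc t) (yc t)) (at t within T)"
        using dxc TJ tT by (auto intro: DERIV_subset)
      have img: "xc ` T \<subseteq> I0"
      proof
        fix z assume "z \<in> xc ` T"
        then obtain t' where "t' \<in> T" "z = xc t'" by auto
        then show "z \<in> I0" using bnd[of t'] inI0[of z] by auto
      qed
      have d2: "(\<Phi> has_real_derivative 1 / g (xc t)) (at (xc t) within xc ` T)"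
        using DERIV_subset[OF \<Phi>d[OF xI] img] .
      have "((\<Phi> \<circ> xc) has_real_derivative 1 / g (xc t) * p (xc t) (yc t)) (at t within T)"
        by (rule DERIV_image_chain[OF d2 d1])
      moreover have "1 / g (xc t) * p (xc t) (yc t) = 1" using gnz[OF xI] yeq by (simp add: g_def)
      ultimately have "((\<lambda>t. \<Phi> (xc t)) has_real_derivative 1) (at t within T)" by (simp add: o_def)
      from DERIV_diff[OF this DERIV_ident] show "((\<lambda>t. \<Phi> (xc t) - t) has_real_derivative 0) (at t within T)"
        by simp
    qed
    then show ?thesis using t t0T ic by force
  qed
  have "x1 t = x2 t \<and> y1 t = y2 t" if tT: "t \<in> T" for t
  proof -
    have b1: "\<And>t. t \<in> T \<Longrightarrow> \<bar>x1 t - x0\<bar> < \<rho> \<and> \<bar>y1 t - y0\<bar> < r" using inT by blast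
    have b2: "\<And>t. t \<in> T \<Longrightarrow> \<bar>x2 t - x0\<bar> < \<rho> \<and> \<bar>y2 t - y0\<bar> < r" using inT by blast
    have "\<Phi> (x1 t) = \<Phi> (x2 t)"
      using phit[OF tT dx1 dy1 i1 b1] phit[OF tT dx2 dy2 i2 b2] by simp
    moreover have "x1 t \<in> I0" "x2 t \<in> I0" using b1[OF tT] b2[OF tT] inI0 by auto
    ultimately have xe: "x1 t = x2 t" using \<Phi>inj by blast
    have "y1 t = \<gamma> (x1 t)"
      using \<gamma>u[of "x1 t" "y1 t"] b1[OF tT] cons[OF tT dx1 dy1 i1] by auto
    moreover have "y2 t = \<gamma> (x2 t)"
      using \<gamma>u[of "x2 t" "y2 t"] b2[OF tT] cons[OF tT dx2 dy2 i2] by auto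
    ultimately show ?thesis using xe by simp
  qed
  then show ?thesis using \<delta> by (intro exI[of _ \<delta>]) (auto simp: T_def abs_less_iff)
qed


lemma comp_deriv:
  assumes "(X has_vector_derivative v) (at t within S)"
  shows "((\<lambda>t. X t $ i) has_real_derivative v $ i) (at t within S)"
proof -
  have "((\<lambda>t. X t $ i) has_derivative (\<lambda>h. (h *\<^sub>R v) $ i)) (at t within S)"
    using bounded_linear.has_derivative[OF bounded_linear_vec_nth assms[unfolded has_vector_derivative_def]] .
  moreover have "(\<lambda>h. (h *\<^sub>R v) $ i) = (*) (v $ i)" by (auto simp: fun_eq_iff mult.commute)
  ultimately show ?thesis by (simp add: has_field_derivative_def)
qed

theorem theorem5p1:
  fixes u :: "real^2 \<Rightarrow> real^2" and D :: "(real^2) set" and a :: "real^2"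
    and I :: "real set" and X Y :: "real \<Rightarrow> real^2"
  assumes "continuous_on UNIV u"
    and "weakly_div_free u"
    and "open D" and "connected D"
    and "\<forall>x\<in>D. u x \<noteq> 0"
    and "a \<in> D"
    and "is_interval I" and "0 \<in> I"
    and "\<forall>t\<in>I. X t \<in> D" and "\<forall>t\<in>I. Y t \<in> D"
    and "\<forall>t\<in>I. (X has_vector_derivative u (X t)) (at t within I)"
    and "\<forall>t\<in>I. (Y has_vector_derivative u (Y t)) (at t within I)"
    and "X 0 = a" and "Y 0 = a"
  shows "\<forall>t\<in>I. X t = Y t"
proof -
  note uc = assms(1) and wd = assms(2) and nzD = assms(5) and Iint = assms(7) and I0 = assms(8)
    and XD = assms(9) and YD = assms(10) and dX = assms(11) and dY = assms(12)
  define p where "p x y = u (vector [x, y]) $ 1" for x y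
  define q where "q x y = u (vector [x, y]) $ 2" for x y
  have PC: "continuous_on UNIV (\<lambda>z. p (fst z) (snd z))" unfolding p_def using cont_comp2[OF uc] .
  have QC: "continuous_on UNIV (\<lambda>z. q (fst z) (snd z))" unfolding q_def using cont_comp2[OF uc] .
  have FF: "fluxfree p q" unfolding fluxfree_def p_def q_def using flux_box[OF uc wd] by blast
  define p' where "p' x y = q y x" for x y
  define q' where "q' x y = p y x" for x y
  have PC': "continuous_on UNIV (\<lambda>z. p' (fst z) (snd z))" unfolding p'_def q_def using cont_comp1[OF uc] .
  have QC': "continuous_on UNIV (\<lambda>z. q' (fst z) (snd z))" unfolding q'_def p_def using cont_comp1[OF uc] .
  have FF': "fluxfree p' q'"
    unfolding fluxfree_def p'_def q'_def
  proof (intro allI impI)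
    fix a b c d :: real assume "a < b" "c < d"
    then have "integral {a..b} (\<lambda>y. p d y - p c y) + integral {c..d} (\<lambda>x. q x b - q x a) = 0"
      using FF unfolding fluxfree_def by blast
    then show "integral {c..d} (\<lambda>y. q y b - q y a) + integral {a..b} (\<lambda>x. p d x - p c x) = 0" by simp
  qed
  have uX: "u (X t) $ 1 = p (X t $ 1) (X t $ 2)" "u (X t) $ 2 = q (X t $ 1) (X t $ 2)" for t
    by (simp_all add: p_def q_def flip: vec2_eq)
  have uY: "u (Y t) $ 1 = p (Y t $ 1) (Y t $ 2)" "u (Y t) $ 2 = q (Y t $ 1) (Y t $ 2)" for t
    by (simp_all add: p_def q_def flip: vec2_eq)
  have dX1: "((\<lambda>t. X t $ 1) has_real_derivative p (X t $ 1) (X t $ 2)) (at t within I)" if "t \<in> I" for t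
    using comp_deriv[OF dX[rule_format, OF that], of 1] uX by simp
  have dX2: "((\<lambda>t. X t $ 2) has_real_derivative q (X t $ 1) (X t $ 2)) (at t within I)" if "t \<in> I" for t
    using comp_deriv[OF dX[rule_format, OF that], of 2] uX by simp
  have dY1: "((\<lambda>t. Y t $ 1) has_real_derivative p (Y t $ 1) (Y t $ 2)) (at t within I)" if "t \<in> I" for t
    using comp_deriv[OF dY[rule_format, OF that], of 1] uY by simp
  have dY2: "((\<lambda>t. Y t $ 2) has_real_derivative q (Y t $ 1) (Y t $ 2)) (at t within I)" if "t \<in> I" for t
    using comp_deriv[OF dY[rule_format, OF that], of 2] uY by simp
  define E where "E = {t \<in> I. X t = Y t}"
  have contX: "continuous_on I X"
    using dX has_vector_derivative_continuous continuous_on_eq_continuous_within by blast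
  have contY: "continuous_on I Y"
    using dY has_vector_derivative_continuous continuous_on_eq_continuous_within by blast
  have closedE: "closedin (top_of_set I) E"
  proof -
    have "closedin (top_of_set I) {t \<in> I. X t - Y t = 0}"
      by (rule continuous_closedin_preimage_constant) (intro continuous_intros contX contY)
    then show ?thesis by (simp add: E_def)
  qed
  have openE: "openin (top_of_set I) E"
    unfolding openin_euclidean_subtopology_iff
  proof (intro conjI ballI)
    show "E \<subseteq> I" by (auto simp: E_def)
    fix t0 assume t0: "t0 \<in> E"
    then have t0I: "t0 \<in> I" and eq: "X t0 = Y t0" by (auto simp: E_def)
    have "u (X t0) \<noteq> 0" using nzD XD t0I by blast
    then have "u (X t0) $ 1 \<noteq> 0 \<or> u (X t0) $ 2 \<noteq> 0" by (auto simp: vec_eq_iff forall_2)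
    then have "\<exists>\<delta>>0. \<forall>t\<in>I. \<bar>t - t0\<bar> < \<delta> \<longrightarrow> X t $ 1 = Y t $ 1 \<and> X t $ 2 = Y t $ 2"
    proof
      assume nz: "u (X t0) $ 1 \<noteq> 0"
      show ?thesis
        by (rule core_local[OF PC QC FF _ Iint t0I dX1 dX2 dY1 dY2, of "X t0 $ 1" "X t0 $ 2"])
          (use nz uX[of t0] eq in auto)
    next
      assume nz: "u (X t0) $ 2 \<noteq> 0"
      have dX1': "((\<lambda>t. X t $ 2) has_real_derivative p' (X t $ 2) (X t $ 1)) (at t within I)" if "t \<in> I" for t
        using dX2[OF that] by (simp add: p'_def)
      have dX2': "((\<lambda>t. X t $ 1) has_real_derivative q' (X t $ 2) (X t $ 1)) (at t within I)" if "t \<in> I" for t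
        using dX1[OF that] by (simp add: q'_def)
      have dY1': "((\<lambda>t. Y t $ 2) has_real_derivative p' (Y t $ 2) (Y t $ 1)) (at t within I)" if "t \<in> I" for t
        using dY2[OF that] by (simp add: p'_def)
      have dY2': "((\<lambda>t. Y t $ 1) has_real_derivative q' (Y t $ 2) (Y t $ 1)) (at t within I)" if "t \<in> I" for t
        using dY1[OF that] by (simp add: q'_def)
      have "\<exists>\<delta>>0. \<forall>t\<in>I. \<bar>t - t0\<bar> < \<delta> \<longrightarrow> X t $ 2 = Y t $ 2 \<and> X t $ 1 = Y t $ 1"
        by (rule core_local[OF PC' QC' FF' _ Iint t0I dX1' dX2' dY1' dY2', of "X t0 $ 2" "X t0 $ 1"])
          (use nz uX[of t0] eq in \<open>auto simp: p'_def\<close>)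
      then show ?thesis by blast
    qed
    then obtain \<delta> where \<delta>: "\<delta> > 0" "\<And>t. t \<in> I \<Longrightarrow> \<bar>t - t0\<bar> < \<delta> \<Longrightarrow> X t $ 1 = Y t $ 1 \<and> X t $ 2 = Y t $ 2"
      by blast
    show "\<exists>e>0. \<forall>x'\<in>I. dist x' t0 < e \<longrightarrow> x' \<in> E"
    proof (intro exI[of _ \<delta>] conjI ballI impI)
      show "\<delta> > 0" by fact
      fix t assume "t \<in> I" "dist t t0 < \<delta>"
      then have "X t $ 1 = Y t $ 1 \<and> X t $ 2 = Y t $ 2" using \<delta>(2) by (simp add: dist_real_def)
      then have "X t = Y t" by (simp add: vec_eq_iff forall_2)
      then show "t \<in> E" using \<open>t \<in> I\<close> by (simp add: E_def)
    qed
  qed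
  have "0 \<in> E" using I0 assms(13,14) by (simp add: E_def)
  moreover have "connected I" using is_interval_connected[OF Iint] .
  ultimately have "E = I" using openE closedE unfolding connected_clopen by blast
  then show ?thesis by (auto simp: E_def)
qed


end
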